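(* Let $m>0$ and $C>\frac{2}{(4\pi)^2}$. There exists $D_C\in\mathbb{R}_+$, independent of $\varepsilon\in(0,1]$, such that for every $\varepsilon\in(0,1]$, $x\in\mathbb{R}^2$ and $z\in\varepsilon\mathbb{Z}^2$, $$|\mathcal{G}_\varepsilon(x,z)|\le C\log_+\Big(\frac{1}{\sqrt{|x|^2+|z|^2}\vee\varepsilon}\Big)+D_C,$$ where $\log_+(t)=\max(\log t,0)$ and $a\vee b=\max(a,b)$.
   Context: For $\varepsilon\in(0,1]$, $x\in\mathbb{R}^2$, $z\in\varepsilon\mathbb{Z}^2$, $$\mathcal{G}_\varepsilon(x,z)=\frac{1}{(2\pi)^4}\int_{\mathbb{R}^2\times[-\pi/\varepsilon,\pi/\varepsilon]^2}\frac{e^{-i(x\cdot y+k\cdot z)}}{\big(|y|^2+4\varepsilon^{-2}\sin^2(\varepsilon k_1/2)+4\varepsilon^{-2}\sin^2(\varepsilon k_2/2)+m^2\big)^2}\,\mathrm{d}y\,\mathrm{d}k,$$ the Green function of $(m^2-\Delta_{\mathbb{R}^2}-\Delta_{\varepsilon\mathbb{Z}^2})^2$ on $\mathbb{R}^2\times\varepsilon\mathbb{Z}^2$. *)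

theory Defs
  imports "HOL-Analysis.Analysis"
begin

text \<open>Symbol (denominator) of the operator (m^2 - Delta_R2 - Delta_{eps Z2}) at frequency (y,k).\<close>
definition symb :: "real \<Rightarrow> real \<Rightarrow> real \<times> real \<Rightarrow> real \<times> real \<Rightarrow> real" where
  "symb m \<epsilon> y k =
     (norm y)\<^sup>2 + 4 * \<epsilon> powi (-2) * (sin (\<epsilon> * fst k / 2))\<^sup>2
               + 4 * \<epsilon> powi (-2) * (sin (\<epsilon> * snd k / 2))\<^sup>2 + m\<^sup>2"

definition Green :: "real \<Rightarrow> real \<Rightarrow> real \<times> real \<Rightarrow> real \<times> real \<Rightarrow> complex" where
  "Green m \<epsilon> x z =
     complex_of_real (1 / (2 * pi) ^ 4) *
     (LINT w : (UNIV \<times> ({-pi/\<epsilon>..pi/\<epsilon>} \<times> {-pi/\<epsilon>..pi/\<epsilon>})) | lborel.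
        exp (- \<i> * complex_of_real (x \<bullet> fst w + snd w \<bullet> z))
        / complex_of_real ((symb m \<epsilon> (fst w) (snd w))\<^sup>2))"

definition lattice :: "real \<Rightarrow> (real \<times> real) set" where
  "lattice \<epsilon> = {(\<epsilon> * of_int a, \<epsilon> * of_int b) | a b :: int. True}"

definition log_plus :: "real \<Rightarrow> real" where
  "log_plus t = max (ln t) 0"

end

theory Submission
  imports Defs "HOL-Probability.Probability" "HOL-Real_Asymp.Real_Asymp"
begin



lemma gauss_ft:
  fixes t \<xi> :: real assumes t: "t > 0"
  shows "has_bochner_integral lborel (\<lambda>y. exp (- t * y\<^sup>2) *\<^sub>R exp (- \<i> * complex_of_real (\<xi> * y)))
           (complex_of_real (sqrt (pi / t) * exp (- \<xi>\<^sup>2 / (4 * t))))"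
proof -
  define s where "s = - \<xi> / sqrt (2 * t)"
  define c where "c = sqrt (2 * t)"
  have c0: "c > 0" using t by (simp add: c_def)
  let ?f = "\<lambda>u. std_normal_density u *\<^sub>R iexp (s * u)"
  interpret real_distribution std_normal_distribution by (rule real_dist_normal_dist)
  have int1: "integrable std_normal_distribution (\<lambda>u. iexp (s * u))"
    by (rule integrable_iexp) auto
  have intf: "integrable lborel ?f"
    using int1 by (subst (asm) integrable_density) auto
  have "char std_normal_distribution s = integral\<^sup>L lborel ?f"
    unfolding char_def by (subst integral_density) auto
  then have I: "integral\<^sup>L lborel ?f = complex_of_real (exp (- s\<^sup>2 / 2))"
    by (simp add: char_std_normal_distribution)
  have eq: "exp (- t * y\<^sup>2) *\<^sub>R exp (- \<i> * complex_of_real (\<xi> * y)) = sqrt (2 * pi) *\<^sub>R ?f (0 + c * y)" for y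
  proof -
    have "(c * y)\<^sup>2 / 2 = t * y\<^sup>2" using t by (simp add: c_def power_mult_distrib)
    moreover have "s * (c * y) = - (\<xi> * y)" using t by (simp add: s_def c_def)
    ultimately show ?thesis
      by (simp add: std_normal_density_def scaleR_conv_of_real)
  qed
  have int2: "integrable lborel (\<lambda>y. ?f (0 + c * y))"
    by (rule lborel_integrable_real_affine[OF intf]) (use c0 in auto)
  have "integral\<^sup>L lborel ?f = \<bar>c\<bar> *\<^sub>R integral\<^sup>L lborel (\<lambda>y. ?f (0 + c * y))"
    by (rule lborel_integral_real_affine) (use c0 in auto)
  then have I2': "c *\<^sub>R integral\<^sup>L lborel (\<lambda>y. ?f (0 + c * y)) = complex_of_real (exp (- s\<^sup>2 / 2))"
    using c0 I by simp
  have I2: "integral\<^sup>L lborel (\<lambda>y. ?f (0 + c * y)) = (1 / c) *\<^sub>R complex_of_real (exp (- s\<^sup>2 / 2))"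
    unfolding I2'[symmetric] using c0 by (simp only: scaleR_scaleR) simp
  have val: "sqrt (2 * pi) * (1 / c) * exp (- s\<^sup>2 / 2) = sqrt (pi / t) * exp (- \<xi>\<^sup>2 / (4 * t))"
  proof -
    have "s\<^sup>2 / 2 = \<xi>\<^sup>2 / (4 * t)" using t by (simp add: s_def power_divide)
    moreover have "sqrt (2 * pi) * (1 / c) = sqrt (pi / t)" using t
      by (simp add: c_def real_sqrt_divide[symmetric] real_sqrt_mult[symmetric])
    ultimately show ?thesis by simp
  qed
  have "has_bochner_integral lborel (\<lambda>y. ?f (0 + c * y)) ((1 / c) *\<^sub>R complex_of_real (exp (- s\<^sup>2 / 2)))"
    using int2 I2 by (simp add: has_bochner_integral_iff)
  then have "has_bochner_integral lborel (\<lambda>y. sqrt (2 * pi) *\<^sub>R ?f (0 + c * y))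
     (sqrt (2 * pi) *\<^sub>R ((1 / c) *\<^sub>R complex_of_real (exp (- s\<^sup>2 / 2))))"
    by (rule has_bochner_integral_scaleR_right)
  moreover have "sqrt (2 * pi) *\<^sub>R ((1 / c) *\<^sub>R complex_of_real (exp (- s\<^sup>2 / 2)))
     = complex_of_real (sqrt (pi / t) * exp (- \<xi>\<^sup>2 / (4 * t)))"
    unfolding val[symmetric] by (simp add: scaleR_conv_of_real)
  ultimately show ?thesis unfolding eq by simp
qed


lemma subord:
  fixes s :: real assumes s: "s > 0"
  shows "has_bochner_integral lborel (\<lambda>t. t * exp (- s * t) * indicator {0..} t) (1 / s\<^sup>2)"
proof -
  define F where "F t = - (t / s + 1 / s\<^sup>2) * exp (- s * t)" for t
  have D: "DERIV F t :> t * exp (- s * t)" for t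
    unfolding F_def using s
    by (auto intro!: derivative_eq_intros simp: field_simps power2_eq_square)
  have lim: "(F \<longlongrightarrow> 0) at_top"
    unfolding F_def using s by real_asymp
  have "(\<integral>\<^sup>+t. ennreal (t * exp (- s * t)) * indicator {0..} t \<partial>lborel) = 0 - F 0"
    by (rule nn_integral_FTC_atLeast[OF _ D _ lim]) auto
  also have "0 - F 0 = 1 / s\<^sup>2" by (simp add: F_def)
  finally have N: "(\<integral>\<^sup>+t. ennreal (t * exp (- s * t) * indicator {0..} t) \<partial>lborel) = ennreal (1 / s\<^sup>2)"
    by (simp add: indicator_mult_ennreal mult.commute)
  show ?thesis
    by (rule has_bochner_integral_nn_integral[OF _ _ _ N]) (auto split: split_indicator)
qed

lemma expint:
  fixes c a :: real assumes c: "c > 0"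
  shows "has_bochner_integral lborel (\<lambda>t. exp (- c * t) * indicator {a..} t) (exp (- c * a) / c)"
proof -
  define F where "F t = - exp (- c * t) / c" for t
  have D: "DERIV F t :> exp (- c * t)" for t
    unfolding F_def using c
    by (auto intro!: derivative_eq_intros simp: field_simps)
  have lim: "(F \<longlongrightarrow> 0) at_top"
    unfolding F_def using c by real_asymp
  have "(\<integral>\<^sup>+t. ennreal (exp (- c * t)) * indicator {a..} t \<partial>lborel) = 0 - F a"
    by (rule nn_integral_FTC_atLeast[OF _ D _ lim]) auto
  also have "0 - F a = exp (- c * a) / c" by (simp add: F_def)
  finally have N: "(\<integral>\<^sup>+t. ennreal (exp (- c * t) * indicator {a..} t) \<partial>lborel) = ennreal (exp (- c * a) / c)"
    by (simp add: indicator_mult_ennreal mult.commute)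
  show ?thesis
    by (rule has_bochner_integral_nn_integral[OF _ _ _ N]) (use c in \<open>auto split: split_indicator\<close>)
qed

lemma prod_integrable_integral:
  fixes f :: "'a::euclidean_space \<Rightarrow> 'c::{real_normed_field, banach, second_countable_topology}"
    and g :: "'b::euclidean_space \<Rightarrow> 'c"
  assumes f: "integrable lborel f" and g: "integrable lborel g"
  shows "integrable lborel (\<lambda>p. f (fst p) * g (snd p))"
    and "integral\<^sup>L lborel (\<lambda>p. f (fst p) * g (snd p)) = integral\<^sup>L lborel f * integral\<^sup>L lborel g"
proof -
  have mf[measurable]: "f \<in> borel_measurable lborel" using f by auto
  have mg[measurable]: "g \<in> borel_measurable lborel" using g by auto
  have I: "integrable (lborel \<Otimes>\<^sub>M lborel) (\<lambda>p. f (fst p) * g (snd p))"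
  proof (rule lborel_pair.Fubini_integrable)
    show "(\<lambda>p. f (fst p) * g (snd p)) \<in> borel_measurable (lborel \<Otimes>\<^sub>M lborel)" by measurable
    have "integrable lborel (\<lambda>x. norm (f x) * (\<integral>y. norm (g y) \<partial>lborel))"
      using f by (intro integrable_mult_left) auto
    then show "integrable lborel (\<lambda>x. \<integral>y. norm (f (fst (x, y)) * g (snd (x, y))) \<partial>lborel)"
      by (simp add: norm_mult)
    show "AE x in lborel. integrable lborel (\<lambda>y. f (fst (x, y)) * g (snd (x, y)))"
      using g by (auto intro!: integrable_mult_right)
  qed
  then show "integrable lborel (\<lambda>p. f (fst p) * g (snd p))" by (simp add: lborel_prod)
  have "integral\<^sup>L (lborel \<Otimes>\<^sub>M lborel) (\<lambda>p. f (fst p) * g (snd p)) = (\<integral>x. (\<integral>y. f x * g y \<partial>lborel) \<partial>lborel)"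
    using lborel_pair.integral_fst'[OF I] by simp
  also have "\<dots> = (\<integral>x. f x * integral\<^sup>L lborel g \<partial>lborel)" by simp
  also have "\<dots> = integral\<^sup>L lborel f * integral\<^sup>L lborel g" by simp
  finally show "integral\<^sup>L lborel (\<lambda>p. f (fst p) * g (snd p)) = integral\<^sup>L lborel f * integral\<^sup>L lborel g"
    by (simp add: lborel_prod)
qed



definition aL :: "real \<Rightarrow> real \<Rightarrow> real" where
  "aL \<epsilon> k = 4 * \<epsilon> powi (-2) * (sin (\<epsilon> * k / 2))\<^sup>2"

lemma powi_m2: "(\<epsilon>::real) powi (-2) = 1 / \<epsilon>\<^sup>2"
  by (simp add: power_int_minus field_simps)

lemma aL_alt: "aL \<epsilon> k = 4 * (sin (\<epsilon> * k / 2))\<^sup>2 / \<epsilon>\<^sup>2"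
  by (simp add: aL_def powi_m2)

lemma aL_nonneg: "0 \<le> aL \<epsilon> k"
  by (simp add: aL_alt)

lemma cos_lb: "1 - x\<^sup>2 / 2 \<le> cos (x::real)"
proof -
  have "cos x = 1 - 2 * (sin (x / 2))\<^sup>2"
    using cos_double_sin[of "x/2"] by simp
  moreover have "(sin (x / 2))\<^sup>2 \<le> (x / 2)\<^sup>2"
    using abs_sin_x_le_abs_x[of "x/2"] by (metis abs_le_square_iff)
  ultimately show ?thesis by (simp add: power_divide)
qed

lemma sin_lb: assumes "0 \<le> (v::real)" shows "v - v ^ 3 / 6 \<le> sin v"
proof -
  define f where "f y = sin y - y + y ^ 3 / 6" for y :: real
  have D: "DERIV f y :> cos y - 1 + y\<^sup>2 / 2" for y
    unfolding f_def by (auto intro!: derivative_eq_intros simp: power2_eq_square)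
  have "f 0 \<le> f v"
  proof (rule DERIV_nonneg_imp_nondecreasing[OF assms])
    fix x assume "0 \<le> x" "x \<le> v"
    show "\<exists>y. DERIV f x :> y \<and> 0 \<le> y"
      using D[of x] cos_lb[of x] by (intro exI[of _ "cos x - 1 + x\<^sup>2 / 2"]) auto
  qed
  then show ?thesis by (simp add: f_def)
qed

lemma aL_lb:
  fixes \<epsilon> \<theta> k :: real
  assumes e: "\<epsilon> > 0" and th: "0 < \<theta>" "\<theta> \<le> 1" and k: "\<bar>k\<bar> \<le> pi / \<epsilon>"
  shows "min ((1 - \<theta>\<^sup>2 / 24)\<^sup>2 * k\<^sup>2) ((1 - \<theta>\<^sup>2 / 24)\<^sup>2 * \<theta>\<^sup>2 / \<epsilon>\<^sup>2) \<le> aL \<epsilon> k"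
proof -
  define v where "v = \<bar>\<epsilon> * k / 2\<bar>"
  define g where "g = 1 - \<theta>\<^sup>2 / 24"
  have "\<theta>\<^sup>2 \<le> 1" using th by (simp add: power_le_one)
  then have g0: "0 < g" "g \<le> 1" using th by (auto simp: g_def)
  have v0: "0 \<le> v" by (simp add: v_def)
  have vpi: "v \<le> pi / 2" using k e by (simp add: v_def abs_mult field_simps)
  have sv: "(sin (\<epsilon> * k / 2))\<^sup>2 = (sin v)\<^sup>2"
    by (simp add: v_def abs_if)
  have aLv: "aL \<epsilon> k = 4 * (sin v)\<^sup>2 / \<epsilon>\<^sup>2" by (simp add: aL_alt sv)
  show ?thesis
  proof (cases "v \<le> \<theta> / 2")
    case True
    have "v ^ 3 / 6 \<le> v * (\<theta>\<^sup>2 / 24)"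
    proof -
      have "v\<^sup>2 \<le> (\<theta>/2)\<^sup>2" using True v0 by (intro power_mono) auto
      then have "v * v\<^sup>2 \<le> v * (\<theta>/2)\<^sup>2" using v0 by (intro mult_left_mono) auto
      then show ?thesis by (simp add: power2_eq_square power3_eq_cube power_divide field_simps)
    qed
    then have "g * v \<le> sin v" using sin_lb[OF v0] by (simp add: g_def algebra_simps)
    moreover have "0 \<le> g * v" using g0 v0 by simp
    ultimately have "(g * v)\<^sup>2 \<le> (sin v)\<^sup>2" by (intro power_mono)
    then have "4 * (g * v)\<^sup>2 / \<epsilon>\<^sup>2 \<le> aL \<epsilon> k" unfolding aLv using e
      by (intro divide_right_mono) auto
    moreover have "4 * (g * v)\<^sup>2 / \<epsilon>\<^sup>2 = g\<^sup>2 * k\<^sup>2" using e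
      by (simp add: v_def power_mult_distrib power_divide field_simps abs_mult)
    ultimately show ?thesis by (simp add: g_def)
  next
    case False
    have t2: "0 \<le> \<theta> / 2" using th by simp
    have "\<theta> / 2 - (\<theta>/2) ^ 3 / 6 \<le> sin (\<theta> / 2)" by (rule sin_lb[OF t2])
    moreover have "\<theta> / 2 - (\<theta>/2) ^ 3 / 6 = g * (\<theta> / 2)" by (simp add: g_def field_simps power3_eq_cube power2_eq_square)
    moreover have "sin (\<theta> / 2) \<le> sin v"
      using False vpi th by (intro sin_monotone_2pi_le) auto
    ultimately have "g * (\<theta>/2) \<le> sin v" by simp
    moreover have "0 \<le> g * (\<theta>/2)" using g0 th by simp
    ultimately have "(g * (\<theta>/2))\<^sup>2 \<le> (sin v)\<^sup>2" by (intro power_mono)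
    then have "4 * (g * (\<theta>/2))\<^sup>2 / \<epsilon>\<^sup>2 \<le> aL \<epsilon> k" unfolding aLv using e
      by (intro divide_right_mono) auto
    moreover have "4 * (g * (\<theta>/2))\<^sup>2 / \<epsilon>\<^sup>2 = g\<^sup>2 * \<theta>\<^sup>2 / \<epsilon>\<^sup>2"
      by (simp add: power_mult_distrib power_divide field_simps)
    ultimately have "g\<^sup>2 * \<theta>\<^sup>2 / \<epsilon>\<^sup>2 \<le> aL \<epsilon> k" by (simp only:)
    then show ?thesis unfolding g_def by (rule min.coboundedI2)
  qed
qed





definition Kf :: "real \<Rightarrow> real \<Rightarrow> real \<Rightarrow> real \<Rightarrow> complex" where
  "Kf \<epsilon> t c k = indicator {-pi/\<epsilon>..pi/\<epsilon>} k *\<^sub>R (exp (- t * aL \<epsilon> k) *\<^sub>R exp (- \<i> * complex_of_real (c * k)))"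

definition Lf :: "real \<Rightarrow> real \<Rightarrow> real \<Rightarrow> complex" where
  "Lf \<epsilon> t c = integral\<^sup>L lborel (Kf \<epsilon> t c)"

definition L0 :: "real \<Rightarrow> real \<Rightarrow> real" where
  "L0 \<epsilon> t = integral\<^sup>L lborel (\<lambda>k. indicator {-pi/\<epsilon>..pi/\<epsilon>} k * exp (- t * aL \<epsilon> k))"

lemma cont_aL: "continuous_on S (aL \<epsilon>)"
  unfolding aL_def by (intro continuous_intros) auto

lemma emeasure_Icc_fin: "emeasure lborel {a..b::real} < \<infinity>"
  by (rule emeasure_compact_finite) auto

lemma emeasure_Icc_fin': "emeasure lborel {a..b::real} < top"
  using emeasure_Icc_fin[of a b] by simp

lemma integrable_ind_Icc: "integrable lborel (indicator {a..b::real} :: real \<Rightarrow> real)"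
  by (rule integrable_real_indicator) (auto simp: emeasure_Icc_fin emeasure_Icc_fin')

lemma cont_exp_aL: "continuous_on S (\<lambda>x. exp (- t * aL \<epsilon> x))"
  by (intro continuous_intros cont_aL[THEN continuous_on_compose2]) auto

lemma Kf_int: "integrable lborel (Kf \<epsilon> t c)"
  unfolding Kf_def
  by (rule borel_integrable_compact) (auto intro!: continuous_intros cont_aL[THEN continuous_on_compose2])

lemma K0_int: "integrable lborel (\<lambda>k. indicator {-pi/\<epsilon>..pi/\<epsilon>} k * exp (- t * aL \<epsilon> k))"
  using borel_integrable_compact[of "{-pi/\<epsilon>..pi/\<epsilon>}" "\<lambda>k. exp (- t * aL \<epsilon> k)", OF _ cont_exp_aL]
  by simp

lemma norm_Lf: "norm (Lf \<epsilon> t c) \<le> L0 \<epsilon> t"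
proof -
  have "norm (Lf \<epsilon> t c) \<le> integral\<^sup>L lborel (\<lambda>k. norm (Kf \<epsilon> t c k))"
    unfolding Lf_def by (rule integral_norm_bound)
  also have "(\<lambda>k. norm (Kf \<epsilon> t c k)) = (\<lambda>k. indicator {-pi/\<epsilon>..pi/\<epsilon>} k * exp (- t * aL \<epsilon> k))"
    by (auto simp: Kf_def norm_exp_eq_Re split: split_indicator)
  finally show ?thesis by (simp add: L0_def)
qed

lemma L0_le: assumes e: "\<epsilon> > 0" and t: "t \<ge> 0" shows "L0 \<epsilon> t \<le> 2 * pi / \<epsilon>"
proof -
  have "L0 \<epsilon> t \<le> integral\<^sup>L lborel (indicator {-pi/\<epsilon>..pi/\<epsilon>} :: real \<Rightarrow> real)"
    unfolding L0_def
  proof (rule integral_mono[OF K0_int])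
    show "integrable lborel (indicator {-pi/\<epsilon>..pi/\<epsilon>} :: real \<Rightarrow> real)" by (rule integrable_ind_Icc)
    fix k show "indicator {-pi/\<epsilon>..pi/\<epsilon>} k * exp (- t * aL \<epsilon> k) \<le> (indicator {-pi/\<epsilon>..pi/\<epsilon>} k :: real)"
      using t aL_nonneg[of \<epsilon> k] by (auto split: split_indicator simp: mult_nonneg_nonneg)
  qed
  also have "\<dots> = 2 * pi / \<epsilon>" using e by (simp add: field_simps)
  finally show ?thesis .
qed

lemma gauss_real:
  assumes t: "t > 0" shows "has_bochner_integral lborel (\<lambda>y. exp (- t * y\<^sup>2)) (sqrt (pi / t))"
  using has_bochner_integral_Re[OF gauss_ft[OF t, of 0]] by simp

lemma L0_gauss:
  fixes \<epsilon> t \<theta> :: real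
  assumes e: "\<epsilon> > 0" and t: "t > 0" and th: "0 < \<theta>" "\<theta> \<le> 1"
  defines "\<gamma> \<equiv> (1 - \<theta>\<^sup>2 / 24)\<^sup>2"
  shows "L0 \<epsilon> t \<le> sqrt (pi / (\<gamma> * t)) + 2 * pi / \<epsilon> * exp (- t * (\<gamma> * \<theta>\<^sup>2) / \<epsilon>\<^sup>2)"
proof -
  have "\<theta>\<^sup>2 \<le> 1" using th by (simp add: power_le_one)
  then have g0: "\<gamma> > 0" unfolding \<gamma>_def by (auto)
  have G: "has_bochner_integral lborel (\<lambda>y. exp (- (\<gamma> * t) * y\<^sup>2)) (sqrt (pi / (\<gamma> * t)))"
    by (rule gauss_real) (use g0 t in simp)
  have I2: "has_bochner_integral lborel (\<lambda>k. indicator {-pi/\<epsilon>..pi/\<epsilon>} k * exp (- t * (\<gamma> * \<theta>\<^sup>2) / \<epsilon>\<^sup>2))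
      (2 * pi / \<epsilon> * exp (- t * (\<gamma> * \<theta>\<^sup>2) / \<epsilon>\<^sup>2))"
  proof -
    have "has_bochner_integral lborel (\<lambda>k. indicator {-pi/\<epsilon>..pi/\<epsilon>} k * exp (- t * (\<gamma> * \<theta>\<^sup>2) / \<epsilon>\<^sup>2))
      (measure lborel {-pi/\<epsilon>..pi/\<epsilon>} * exp (- t * (\<gamma> * \<theta>\<^sup>2) / \<epsilon>\<^sup>2))"
      by (intro has_bochner_integral_mult_left has_bochner_integral_real_indicator) (auto simp: emeasure_Icc_fin emeasure_Icc_fin')
    then show ?thesis using e by (simp add: field_simps)
  qed
  have "L0 \<epsilon> t \<le> integral\<^sup>L lborel (\<lambda>k. exp (- (\<gamma> * t) * k\<^sup>2) + indicator {-pi/\<epsilon>..pi/\<epsilon>} k * exp (- t * (\<gamma> * \<theta>\<^sup>2) / \<epsilon>\<^sup>2))"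
    unfolding L0_def
  proof (rule integral_mono[OF K0_int])
    show "integrable lborel (\<lambda>k. exp (- (\<gamma> * t) * k\<^sup>2) + indicator {-pi/\<epsilon>..pi/\<epsilon>} k * exp (- t * (\<gamma> * \<theta>\<^sup>2) / \<epsilon>\<^sup>2))"
      by (rule Bochner_Integration.integrable_add) (use G I2 in \<open>auto simp: has_bochner_integral_iff\<close>)
    fix k
    show "indicator {-pi/\<epsilon>..pi/\<epsilon>} k * exp (- t * aL \<epsilon> k) \<le> exp (- (\<gamma> * t) * k\<^sup>2) + indicator {-pi/\<epsilon>..pi/\<epsilon>} k * exp (- t * (\<gamma> * \<theta>\<^sup>2) / \<epsilon>\<^sup>2)"
    proof (cases "k \<in> {-pi/\<epsilon>..pi/\<epsilon>}")
      case True
      then have "\<bar>k\<bar> \<le> pi / \<epsilon>" by auto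
      from aL_lb[OF e th this] have m: "min (\<gamma> * k\<^sup>2) (\<gamma> * \<theta>\<^sup>2 / \<epsilon>\<^sup>2) \<le> aL \<epsilon> k"
        unfolding \<gamma>_def .
      show ?thesis
      proof (cases "\<gamma> * k\<^sup>2 \<le> \<gamma> * \<theta>\<^sup>2 / \<epsilon>\<^sup>2")
        case True
        then have "\<gamma> * k\<^sup>2 \<le> aL \<epsilon> k" using m by simp
        then have "exp (- t * aL \<epsilon> k) \<le> exp (- (\<gamma> * t) * k\<^sup>2)" using t
          by (simp add: mult_left_mono)
        moreover have "0 \<le> exp (- t * (\<gamma> * \<theta>\<^sup>2) / \<epsilon>\<^sup>2)" by simp
        ultimately have "exp (- t * aL \<epsilon> k) \<le> exp (- (\<gamma> * t) * k\<^sup>2) + exp (- t * (\<gamma> * \<theta>\<^sup>2) / \<epsilon>\<^sup>2)"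
          by linarith
        then show ?thesis using \<open>k \<in> _\<close> by (simp only: indicator_simps mult_1_left)
      next
        case False
        then have "\<gamma> * \<theta>\<^sup>2 / \<epsilon>\<^sup>2 \<le> aL \<epsilon> k" using m by simp
        then have "t * (\<gamma> * \<theta>\<^sup>2 / \<epsilon>\<^sup>2) \<le> t * aL \<epsilon> k" using t by (intro mult_left_mono) auto
        then have "exp (- t * aL \<epsilon> k) \<le> exp (- t * (\<gamma> * \<theta>\<^sup>2) / \<epsilon>\<^sup>2)" by simp
        then show ?thesis using \<open>k \<in> _\<close> by (simp add: add_increasing)
      qed
    qed simp
  qed
  also have "\<dots> = sqrt (pi / (\<gamma> * t)) + 2 * pi / \<epsilon> * exp (- t * (\<gamma> * \<theta>\<^sup>2) / \<epsilon>\<^sup>2)"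
    using G I2 by (subst Bochner_Integration.integral_add) (auto simp: has_bochner_integral_iff)
  finally show ?thesis .
qed




lemma e_deriv:
  "((\<lambda>k. exp (- \<i> * complex_of_real (c * k))) has_vector_derivative
      (- \<i> * complex_of_real c * exp (- \<i> * complex_of_real (c * k)))) (at k within S)"
proof -
  have "((\<lambda>z. exp (- \<i> * (complex_of_real c * z))) has_field_derivative
      (exp (- \<i> * (complex_of_real c * complex_of_real k)) * (- \<i> * complex_of_real c))) (at (complex_of_real k))"
    by (auto intro!: derivative_eq_intros)
  from has_vector_derivative_real_field[OF this] show ?thesis
    by (simp add: mult.commute mult.left_commute)
qed

lemma aL_deriv: assumes "\<epsilon> \<noteq> 0"
  shows "DERIV (aL \<epsilon>) k :> 4 * sin (\<epsilon> * k / 2) * cos (\<epsilon> * k / 2) / \<epsilon>"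
proof -
  have "aL \<epsilon> = (\<lambda>k. 4 * (sin (\<epsilon> * k / 2))\<^sup>2 / \<epsilon>\<^sup>2)" by (simp add: aL_alt fun_eq_iff)
  moreover have "DERIV (\<lambda>k. 4 * (sin (\<epsilon> * k / 2))\<^sup>2 / \<epsilon>\<^sup>2) k :> 4 * sin (\<epsilon> * k / 2) * cos (\<epsilon> * k / 2) / \<epsilon>"
    using assms by (auto intro!: derivative_eq_intros simp: power2_eq_square field_simps)
  ultimately show ?thesis by simp
qed

lemma sqrt_exp_bound: assumes "0 \<le> s" shows "sqrt s * exp (- s) \<le> exp (- s / 2)"
proof -
  have "s \<le> exp s" using exp_ge_add_one_self[of s] by linarith
  then have "sqrt s \<le> sqrt (exp s)" by simp
  also have "sqrt (exp s) = exp (s / 2)"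
    by (rule real_sqrt_unique) (simp_all add: power2_eq_square flip: exp_add)
  finally have "sqrt s \<le> exp (s / 2)" .
  then have "sqrt s * exp (- s) \<le> exp (s / 2) * exp (- s)" by (intro mult_right_mono) auto
  also have "exp (s / 2) * exp (- s) = exp (- s / 2)" by (simp flip: exp_add)
  finally show ?thesis .
qed

lemma Lf_HK: "Lf \<epsilon> t c = integral {-pi/\<epsilon>..pi/\<epsilon>} (\<lambda>k. exp (- t * aL \<epsilon> k) *\<^sub>R exp (- \<i> * complex_of_real (c * k)))"
proof -
  have "set_integrable lborel {-pi/\<epsilon>..pi/\<epsilon>} (\<lambda>k. exp (- t * aL \<epsilon> k) *\<^sub>R exp (- \<i> * complex_of_real (c * k)))"
    using Kf_int[of \<epsilon> t c] unfolding set_integrable_def Kf_def[abs_def] by simp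
  from set_borel_integral_eq_integral(2)[OF this] show ?thesis
    by (simp add: Lf_def Kf_def[abs_def] set_lebesgue_integral_def)
qed

lemma L0_HK: "L0 \<epsilon> t = integral {-pi/\<epsilon>..pi/\<epsilon>} (\<lambda>k. exp (- t * aL \<epsilon> k))"
proof -
  have "set_integrable lborel {-pi/\<epsilon>..pi/\<epsilon>} (\<lambda>k. exp (- t * aL \<epsilon> k))"
    using K0_int[of \<epsilon> t] by (simp add: set_integrable_def)
  from set_borel_integral_eq_integral(2)[OF this] show ?thesis
    by (simp add: L0_def set_lebesgue_integral_def)
qed

lemma Lf_ibp:
  fixes \<epsilon> t :: real and n :: int
  assumes e: "\<epsilon> > 0" and t: "t > 0" and n: "n \<noteq> 0"
  defines "c \<equiv> \<epsilon> * of_int n"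
  shows "norm (Lf \<epsilon> t c) \<le> 2 * sqrt t / \<bar>c\<bar> * L0 \<epsilon> (t / 2)"
proof -
  define a where "a = - pi / \<epsilon>"
  define b where "b = pi / \<epsilon>"
  have ab: "a \<le> b" using e by (simp add: a_def b_def)
  have c0: "c \<noteq> 0" using e n by (simp add: c_def)
  define h where "h k = exp (- t * aL \<epsilon> k)" for k
  define d where "d k = 4 * sin (\<epsilon> * k / 2) * cos (\<epsilon> * k / 2) / \<epsilon>" for k
  define h' where "h' k = - t * d k * h k" for k
  define E where "E k = exp (- \<i> * complex_of_real (c * k))" for k
  define F where "F k = complex_of_real (h k) * E k / (- \<i> * complex_of_real c)" for k
  define F' where "F' k = complex_of_real (h k) * E k + complex_of_real (h' k) * E k / (- \<i> * complex_of_real c)" for k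
  have hD: "DERIV h k :> h' k" for k
    unfolding h_def h'_def d_def
    by (auto intro!: derivative_eq_intros aL_deriv simp: e[THEN less_imp_neq, symmetric])
  have FD: "(F has_vector_derivative F' k) (at k within {a..b})" for k
  proof -
    have "((\<lambda>k. complex_of_real (h k) * E k) has_vector_derivative
        (complex_of_real (h k) * (- \<i> * complex_of_real c * E k) + complex_of_real (h' k) * E k)) (at k within {a..b})"
      unfolding E_def by (intro has_vector_derivative_mult e_deriv has_vector_derivative_of_real hD[THEN DERIV_subset]) auto
    then have "((\<lambda>k. complex_of_real (h k) * E k / (- \<i> * complex_of_real c)) has_vector_derivative
        ((complex_of_real (h k) * (- \<i> * complex_of_real c * E k) + complex_of_real (h' k) * E k) / (- \<i> * complex_of_real c))) (at k within {a..b})"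
      by (rule has_vector_derivative_divide)
    moreover have "(complex_of_real (h k) * (- \<i> * complex_of_real c * E k) + complex_of_real (h' k) * E k) / (- \<i> * complex_of_real c) = F' k"
      using c0 by (simp add: F'_def field_simps)
    ultimately show ?thesis unfolding F_def by simp
  qed
  have FTC: "(F' has_integral (F b - F a)) {a..b}"
    by (rule fundamental_theorem_of_calculus[OF ab]) (use FD in auto)
  have hab: "h b = h a" unfolding h_def a_def b_def aL_alt
    by (simp add: power2_eq_square)
  have Eab: "E b = E a"
  proof -
    have "E b = exp (- \<i> * complex_of_real (of_int n * pi))" using e by (simp add: E_def c_def b_def)
    also have "\<dots> = exp (\<i> * complex_of_real (of_int n * pi)) * exp (- 2 * \<i> * complex_of_real (of_int n * pi))"
      by (simp flip: exp_add)
    also have "exp (- 2 * \<i> * complex_of_real (of_int n * pi)) = 1"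
    proof -
      have "exp (- 2 * \<i> * complex_of_real (of_int n * pi)) = exp ((2 * of_int (- n) * pi) * \<i>)" by (simp add: algebra_simps)
      also have "\<dots> = 1" by (rule exp_integer_2pi) (simp add: Ints_minus)
      finally show ?thesis .
    qed
    also have "exp (\<i> * complex_of_real (of_int n * pi)) = E a" using e by (simp add: E_def c_def a_def)
    finally show ?thesis by simp
  qed
  have "F b - F a = 0" unfolding F_def using hab Eab by simp
  with FTC have F'0: "(F' has_integral 0) {a..b}" by simp
  have contE: "continuous_on {a..b} E" unfolding E_def by (intro continuous_intros)
  have conth: "continuous_on {a..b} h" unfolding h_def by (rule cont_exp_aL)
  have contd: "continuous_on {a..b} d" unfolding d_def by (intro continuous_intros) (use e in auto)
  have conth': "continuous_on {a..b} h'" unfolding h'_def using contd conth by (intro continuous_intros)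
  have int1: "(\<lambda>k. complex_of_real (h k) * E k) integrable_on {a..b}"
    by (intro integrable_continuous_interval continuous_intros contE conth)
  have int2: "(\<lambda>k. complex_of_real (h' k) * E k / (- \<i> * complex_of_real c)) integrable_on {a..b}"
    by (intro integrable_continuous_interval continuous_intros contE conth') (use c0 in auto)
  have F0: "integral {a..b} F' = 0" using F'0 by (rule integral_unique)
  have sum: "integral {a..b} F' = integral {a..b} (\<lambda>k. complex_of_real (h k) * E k) + integral {a..b} (\<lambda>k. complex_of_real (h' k) * E k / (- \<i> * complex_of_real c))"
    unfolding F'_def by (rule integral_add[OF int1 int2])
  have "integral {a..b} (\<lambda>k. complex_of_real (h k) * E k) + integral {a..b} (\<lambda>k. complex_of_real (h' k) * E k / (- \<i> * complex_of_real c)) = 0"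
    using sum F0 by metis
  then have "integral {a..b} (\<lambda>k. complex_of_real (h k) * E k) = - integral {a..b} (\<lambda>k. complex_of_real (h' k) * E k / (- \<i> * complex_of_real c))"
    by (subst eq_neg_iff_add_eq_0)
  moreover have "Lf \<epsilon> t c = integral {a..b} (\<lambda>k. complex_of_real (h k) * E k)"
    unfolding Lf_HK a_def b_def h_def E_def by (simp add: scaleR_conv_of_real)
  ultimately have "norm (Lf \<epsilon> t c) = norm (integral {a..b} (\<lambda>k. complex_of_real (h' k) * E k / (- \<i> * complex_of_real c)))"
    by simp
  also have "\<dots> \<le> integral {a..b} (\<lambda>k. 2 * sqrt t / \<bar>c\<bar> * exp (- (t / 2) * aL \<epsilon> k))"
  proof (rule integral_norm_bound_integral[OF int2])
    show "(\<lambda>k. 2 * sqrt t / \<bar>c\<bar> * exp (- (t / 2) * aL \<epsilon> k)) integrable_on {a..b}"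
      by (intro integrable_continuous_interval continuous_intros cont_exp_aL)
    fix k assume "k \<in> {a..b}"
    have nE: "norm (E k) = 1" by (simp add: E_def)
    have "\<bar>d k\<bar> \<le> 2 * sqrt (aL \<epsilon> k)"
    proof -
      have "(d k)\<^sup>2 = 16 * (sin (\<epsilon> * k / 2))\<^sup>2 * (cos (\<epsilon> * k / 2))\<^sup>2 / \<epsilon>\<^sup>2"
        by (simp add: d_def power_mult_distrib power_divide)
      also have "\<dots> \<le> 16 * (sin (\<epsilon> * k / 2))\<^sup>2 * 1 / \<epsilon>\<^sup>2"
        by (intro divide_right_mono mult_left_mono) (auto simp: abs_square_le_1)
      also have "\<dots> = (2 * sqrt (aL \<epsilon> k))\<^sup>2"
        by (simp add: aL_alt power_mult_distrib)
      finally have "\<bar>d k\<bar> \<le> \<bar>2 * sqrt (aL \<epsilon> k)\<bar>" by (simp only: abs_le_square_iff)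
      then show ?thesis using aL_nonneg[of \<epsilon> k] by simp
    qed
    have "norm (complex_of_real (h' k) * E k / (- \<i> * complex_of_real c)) = \<bar>h' k\<bar> / \<bar>c\<bar>"
      by (simp add: norm_divide norm_mult nE)
    also have "\<bar>h' k\<bar> = t * \<bar>d k\<bar> * h k" using t by (simp add: h'_def abs_mult h_def)
    also have "\<dots> \<le> t * (2 * sqrt (aL \<epsilon> k)) * h k"
      using \<open>\<bar>d k\<bar> \<le> _\<close> t by (intro mult_right_mono mult_left_mono) (auto simp: h_def)
    also have "\<dots> = 2 * sqrt t * (sqrt (t * aL \<epsilon> k) * exp (- (t * aL \<epsilon> k)))"
      using t by (simp add: h_def real_sqrt_mult)
    also have "\<dots> \<le> 2 * sqrt t * exp (- (t * aL \<epsilon> k) / 2)"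
      using t aL_nonneg[of \<epsilon> k] by (intro mult_left_mono sqrt_exp_bound) auto
    finally show "norm (complex_of_real (h' k) * E k / (- \<i> * complex_of_real c)) \<le> 2 * sqrt t / \<bar>c\<bar> * exp (- (t / 2) * aL \<epsilon> k)"
      using c0 by (simp add: divide_right_mono field_simps)
  qed
  also have "\<dots> = 2 * sqrt t / \<bar>c\<bar> * L0 \<epsilon> (t / 2)"
    unfolding L0_HK a_def b_def by simp
  finally show ?thesis .
qed




definition Gy :: "real \<Rightarrow> real \<Rightarrow> real \<Rightarrow> complex" where
  "Gy t \<xi> y = exp (- t * y\<^sup>2) *\<^sub>R exp (- \<i> * complex_of_real (\<xi> * y))"

definition Sbox :: "real \<Rightarrow> ((real \<times> real) \<times> (real \<times> real)) set" where
  "Sbox \<epsilon> = UNIV \<times> ({-pi/\<epsilon>..pi/\<epsilon>} \<times> {-pi/\<epsilon>..pi/\<epsilon>})"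

definition Phi :: "real \<Rightarrow> real \<Rightarrow> real \<times> real \<Rightarrow> real \<times> real \<Rightarrow> real \<Rightarrow> (real \<times> real) \<times> (real \<times> real) \<Rightarrow> complex" where
  "Phi m \<epsilon> x z t w = indicator {0..} t *\<^sub>R indicator (Sbox \<epsilon>) w *\<^sub>R
     ((t * exp (- t * symb m \<epsilon> (fst w) (snd w))) *\<^sub>R exp (- \<i> * complex_of_real (x \<bullet> fst w + snd w \<bullet> z)))"

lemma symb_alt: "symb m \<epsilon> (y1, y2) (k1, k2) = y1\<^sup>2 + y2\<^sup>2 + aL \<epsilon> k1 + aL \<epsilon> k2 + m\<^sup>2"
  by (simp add: symb_def aL_def norm_Pair)

lemma Phi_factor:
  assumes t: "t \<ge> 0"
  shows "Phi m \<epsilon> x z t w = (t * exp (- t * m\<^sup>2)) *\<^sub>R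
    ((Gy t (fst x) (fst (fst w)) * Gy t (snd x) (snd (fst w))) *
     (Kf \<epsilon> t (fst z) (fst (snd w)) * Kf \<epsilon> t (snd z) (snd (snd w))))"
proof -
  obtain y1 y2 k1 k2 where w: "w = ((y1, y2), (k1, k2))" by (metis prod.collapse)
  obtain x1 x2 where x: "x = (x1, x2)" by (metis prod.collapse)
  obtain z1 z2 where z: "z = (z1, z2)" by (metis prod.collapse)
  have e1: "exp (- t * (y1\<^sup>2 + y2\<^sup>2 + aL \<epsilon> k1 + aL \<epsilon> k2 + m\<^sup>2)) =
     exp (- t * m\<^sup>2) * (exp (- t * y1\<^sup>2) * exp (- t * y2\<^sup>2) * (exp (- t * aL \<epsilon> k1) * exp (- t * aL \<epsilon> k2)))"
    by (simp flip: exp_add add: algebra_simps)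
  have e2: "exp (- \<i> * complex_of_real (x1 * y1 + x2 * y2 + (k1 * z1 + k2 * z2))) =
     exp (- \<i> * complex_of_real (x1 * y1)) * exp (- \<i> * complex_of_real (x2 * y2)) *
     (exp (- \<i> * complex_of_real (z1 * k1)) * exp (- \<i> * complex_of_real (z2 * k2)))"
    by (simp flip: exp_add add: algebra_simps)
  let ?I = "{-pi/\<epsilon>..pi/\<epsilon>}"
  have L: "Phi m \<epsilon> x z t w = (if k1 \<in> ?I \<and> k2 \<in> ?I then
      (t * exp (- t * (y1\<^sup>2 + y2\<^sup>2 + aL \<epsilon> k1 + aL \<epsilon> k2 + m\<^sup>2))) *\<^sub>R
        exp (- \<i> * complex_of_real (x1 * y1 + x2 * y2 + (k1 * z1 + k2 * z2))) else 0)"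
    using t by (auto simp: Phi_def Sbox_def w x z symb_alt indicator_def)
  have R: "(t * exp (- t * m\<^sup>2)) *\<^sub>R
    ((Gy t (fst x) (fst (fst w)) * Gy t (snd x) (snd (fst w))) *
     (Kf \<epsilon> t (fst z) (fst (snd w)) * Kf \<epsilon> t (snd z) (snd (snd w)))) =
     (if k1 \<in> ?I \<and> k2 \<in> ?I then (t * exp (- t * m\<^sup>2)) *\<^sub>R
       ((exp (- t * y1\<^sup>2) *\<^sub>R exp (- \<i> * complex_of_real (x1 * y1)) * (exp (- t * y2\<^sup>2) *\<^sub>R exp (- \<i> * complex_of_real (x2 * y2)))) *
        (exp (- t * aL \<epsilon> k1) *\<^sub>R exp (- \<i> * complex_of_real (z1 * k1)) * (exp (- t * aL \<epsilon> k2) *\<^sub>R exp (- \<i> * complex_of_real (z2 * k2))))) else 0)"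
    by (auto simp: Gy_def Kf_def w x z indicator_def)
  show ?thesis
    unfolding L R e1 e2 by (simp add: scaleR_conv_of_real ac_simps)
qed


lemma Gy_hb: "t > 0 \<Longrightarrow> has_bochner_integral lborel (Gy t \<xi>) (complex_of_real (sqrt (pi / t) * exp (- \<xi>\<^sup>2 / (4 * t))))"
  unfolding Gy_def[abs_def] by (rule gauss_ft)

lemma norm_Gy: "norm (Gy t \<xi> y) = exp (- t * y\<^sup>2)"
  by (simp add: Gy_def)

lemma norm_Kf: "norm (Kf \<epsilon> t c k) = indicator {-pi/\<epsilon>..pi/\<epsilon>} k * exp (- t * aL \<epsilon> k)"
  by (simp add: Kf_def split: split_indicator)

lemma Phi_w:
  assumes t: "t > 0"
  shows "integrable lborel (Phi m \<epsilon> x z t)"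
    and "integral\<^sup>L lborel (Phi m \<epsilon> x z t) = (t * exp (- t * m\<^sup>2)) *\<^sub>R
      (complex_of_real (sqrt (pi / t) * exp (- (fst x)\<^sup>2 / (4 * t))) * complex_of_real (sqrt (pi / t) * exp (- (snd x)\<^sup>2 / (4 * t))) *
       (Lf \<epsilon> t (fst z) * Lf \<epsilon> t (snd z)))"
proof -
  define P1 where "P1 p = Gy t (fst x) (fst p) * Gy t (snd x) (snd p)" for p :: "real \<times> real"
  define P2 where "P2 q = Kf \<epsilon> t (fst z) (fst q) * Kf \<epsilon> t (snd z) (snd q)" for q :: "real \<times> real"
  have eq: "Phi m \<epsilon> x z t = (\<lambda>w. (t * exp (- t * m\<^sup>2)) *\<^sub>R (P1 (fst w) * P2 (snd w)))"
    using t by (auto simp: fun_eq_iff Phi_factor P1_def P2_def)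
  have G1: "integrable lborel (Gy t \<xi>)" "integral\<^sup>L lborel (Gy t \<xi>) = complex_of_real (sqrt (pi / t) * exp (- \<xi>\<^sup>2 / (4 * t)))" for \<xi>
    using Gy_hb[OF t, of \<xi>] by (auto simp: has_bochner_integral_iff)
  have K1: "integrable lborel (Kf \<epsilon> t c)" for c by (rule Kf_int)
  have iP1: "integrable lborel P1" and vP1: "integral\<^sup>L lborel P1 = complex_of_real (sqrt (pi / t) * exp (- (fst x)\<^sup>2 / (4 * t))) * complex_of_real (sqrt (pi / t) * exp (- (snd x)\<^sup>2 / (4 * t)))"
    unfolding P1_def[abs_def] using prod_integrable_integral[OF G1(1) G1(1)] G1(2) by auto
  have iP2: "integrable lborel P2" and vP2: "integral\<^sup>L lborel P2 = Lf \<epsilon> t (fst z) * Lf \<epsilon> t (snd z)"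
    unfolding P2_def[abs_def] Lf_def using prod_integrable_integral[OF K1 K1] by auto
  show "integrable lborel (Phi m \<epsilon> x z t)"
    unfolding eq by (intro integrable_scaleR_right prod_integrable_integral(1)[OF iP1 iP2])
  show "integral\<^sup>L lborel (Phi m \<epsilon> x z t) = (t * exp (- t * m\<^sup>2)) *\<^sub>R
      (complex_of_real (sqrt (pi / t) * exp (- (fst x)\<^sup>2 / (4 * t))) * complex_of_real (sqrt (pi / t) * exp (- (snd x)\<^sup>2 / (4 * t))) *
       (Lf \<epsilon> t (fst z) * Lf \<epsilon> t (snd z)))"
    unfolding eq integral_scaleR_right prod_integrable_integral(2)[OF iP1 iP2] vP1 vP2 ..
qed

lemma Phi_norm_w:
  assumes t: "t > 0"
  shows "integrable lborel (\<lambda>w. norm (Phi m \<epsilon> x z t w))"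
    and "integral\<^sup>L lborel (\<lambda>w. norm (Phi m \<epsilon> x z t w)) = (t * exp (- t * m\<^sup>2)) * ((sqrt (pi / t) * sqrt (pi / t)) * (L0 \<epsilon> t * L0 \<epsilon> t))"
proof -
  define g where "g y = exp (- t * y\<^sup>2)" for y :: real
  define h where "h k = indicator {-pi/\<epsilon>..pi/\<epsilon>} k * exp (- t * aL \<epsilon> k)" for k :: real
  define P1 where "P1 p = g (fst p) * g (snd p)" for p :: "real \<times> real"
  define P2 where "P2 q = h (fst q) * h (snd q)" for q :: "real \<times> real"
  have eq: "(\<lambda>w. norm (Phi m \<epsilon> x z t w)) = (\<lambda>w. (t * exp (- t * m\<^sup>2)) * (P1 (fst w) * P2 (snd w)))"
    using t by (auto simp: fun_eq_iff Phi_factor P1_def P2_def norm_mult norm_Gy norm_Kf g_def h_def)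
  have G1: "integrable lborel g" "integral\<^sup>L lborel g = sqrt (pi / t)"
    using gauss_real[OF t] by (auto simp: has_bochner_integral_iff g_def[abs_def])
  have K1: "integrable lborel h" "integral\<^sup>L lborel h = L0 \<epsilon> t"
    unfolding h_def[abs_def] L0_def using K0_int[of \<epsilon> t] by auto
  have iP1: "integrable lborel P1" and vP1: "integral\<^sup>L lborel P1 = sqrt (pi / t) * sqrt (pi / t)"
    unfolding P1_def[abs_def] using prod_integrable_integral[OF G1(1) G1(1)] G1(2) by auto
  have iP2: "integrable lborel P2" and vP2: "integral\<^sup>L lborel P2 = L0 \<epsilon> t * L0 \<epsilon> t"
    unfolding P2_def[abs_def] using prod_integrable_integral[OF K1(1) K1(1)] K1(2) by auto
  show "integrable lborel (\<lambda>w. norm (Phi m \<epsilon> x z t w))"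
    unfolding eq by (intro integrable_mult_right prod_integrable_integral(1)[OF iP1 iP2])
  show "integral\<^sup>L lborel (\<lambda>w. norm (Phi m \<epsilon> x z t w)) = (t * exp (- t * m\<^sup>2)) * ((sqrt (pi / t) * sqrt (pi / t)) * (L0 \<epsilon> t * L0 \<epsilon> t))"
    unfolding eq integral_mult_right_zero prod_integrable_integral(2)[OF iP1 iP2] vP1 vP2 ..
qed




lemma Phi_nonpos: "t \<le> 0 \<Longrightarrow> Phi m \<epsilon> x z t w = 0"
  by (cases "t = 0") (auto simp: Phi_def)

lemma Phi_nonpos': "t \<le> 0 \<Longrightarrow> Phi m \<epsilon> x z t = (\<lambda>w. 0)"
  by (simp add: fun_eq_iff Phi_nonpos)

lemma symb_pos: "m > 0 \<Longrightarrow> symb m \<epsilon> y k > 0"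
  unfolding symb_def powi_m2 by (intro add_nonneg_pos) auto

lemma Sbox_borel[measurable]: "Sbox \<epsilon> \<in> sets borel"
  unfolding Sbox_def by (intro borel_closed closed_Times) auto

lemma Phi_meas: "(\<lambda>(t, w). Phi m \<epsilon> x z t w) \<in> borel_measurable (lborel \<Otimes>\<^sub>M lborel)"
proof -
  have c: "continuous_on UNIV (\<lambda>p::real \<times> ((real\<times>real)\<times>(real\<times>real)). (fst p * exp (- fst p * symb m \<epsilon> (fst (snd p)) (snd (snd p)))) *\<^sub>R
      exp (- \<i> * complex_of_real (x \<bullet> fst (snd p) + snd (snd p) \<bullet> z)))"
    unfolding symb_def by (intro continuous_intros) auto
  have m1[measurable]: "(\<lambda>p::real \<times> ((real\<times>real)\<times>(real\<times>real)). (fst p * exp (- fst p * symb m \<epsilon> (fst (snd p)) (snd (snd p)))) *\<^sub>R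
      exp (- \<i> * complex_of_real (x \<bullet> fst (snd p) + snd (snd p) \<bullet> z))) \<in> borel_measurable borel"
    by (rule borel_measurable_continuous_onI[OF c])
  have "(\<lambda>p::real \<times> ((real\<times>real)\<times>(real\<times>real)). Phi m \<epsilon> x z (fst p) (snd p)) \<in> borel_measurable borel"
  proof -
    have e1: "(\<lambda>p::real \<times> ((real\<times>real)\<times>(real\<times>real)). indicator {0..} (fst p) :: real) = indicator ({0..} \<times> UNIV)"
      by (auto simp: fun_eq_iff split: split_indicator)
    have e2: "(\<lambda>p::real \<times> ((real\<times>real)\<times>(real\<times>real)). indicator (Sbox \<epsilon>) (snd p) :: real) = indicator (UNIV \<times> Sbox \<epsilon>)"
      by (auto simp: fun_eq_iff split: split_indicator)
    have i1: "(\<lambda>p::real \<times> ((real\<times>real)\<times>(real\<times>real)). indicator {0..} (fst p) :: real) \<in> borel_measurable borel"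
      unfolding e1 by (intro borel_measurable_indicator borel_closed closed_Times) auto
    have i2: "(\<lambda>p::real \<times> ((real\<times>real)\<times>(real\<times>real)). indicator (Sbox \<epsilon>) (snd p) :: real) \<in> borel_measurable borel"
      unfolding e2 by (unfold Sbox_def, intro borel_measurable_indicator borel_closed closed_Times) auto
    show ?thesis
      unfolding Phi_def by (intro borel_measurable_scaleR i1 i2 m1)
  qed
  then show ?thesis by (simp add: lborel_prod case_prod_beta')
qed


lemma Phi_t_integral:
  assumes m: "m > 0"
  shows "has_bochner_integral lborel (\<lambda>t. Phi m \<epsilon> x z t w)
    (indicator (Sbox \<epsilon>) w *\<^sub>R (exp (- \<i> * complex_of_real (x \<bullet> fst w + snd w \<bullet> z)) / complex_of_real ((symb m \<epsilon> (fst w) (snd w))\<^sup>2)))"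
proof -
  define s where "s = symb m \<epsilon> (fst w) (snd w)"
  define E where "E = indicator (Sbox \<epsilon>) w *\<^sub>R exp (- \<i> * complex_of_real (x \<bullet> fst w + snd w \<bullet> z))"
  have s0: "s > 0" unfolding s_def by (rule symb_pos[OF m])
  have eq: "(\<lambda>t. Phi m \<epsilon> x z t w) = (\<lambda>t. (t * exp (- s * t) * indicator {0..} t) *\<^sub>R E)"
    by (auto simp: fun_eq_iff Phi_def E_def s_def split: split_indicator)
  have "has_bochner_integral lborel (\<lambda>t. (t * exp (- s * t) * indicator {0..} t) *\<^sub>R E) ((1 / s\<^sup>2) *\<^sub>R E)"
    by (rule has_bochner_integral_scaleR_left) (use subord[OF s0] in auto)
  moreover have "(1 / s\<^sup>2) *\<^sub>R E = indicator (Sbox \<epsilon>) w *\<^sub>R (exp (- \<i> * complex_of_real (x \<bullet> fst w + snd w \<bullet> z)) / complex_of_real ((symb m \<epsilon> (fst w) (snd w))\<^sup>2))"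
    unfolding E_def s_def[symmetric] by (simp add: scaleR_conv_of_real field_simps)
  ultimately show ?thesis unfolding eq by simp
qed

lemma Phi_integrable:
  assumes m: "m > 0" and e: "\<epsilon> > 0"
  shows "integrable (lborel \<Otimes>\<^sub>M lborel) (\<lambda>(t, w). Phi m \<epsilon> x z t w)"
proof (rule lborel_pair.Fubini_integrable)
  show "(\<lambda>(t, w). Phi m \<epsilon> x z t w) \<in> borel_measurable (lborel \<Otimes>\<^sub>M lborel)" by (rule Phi_meas)
  show "AE t in lborel. integrable lborel (\<lambda>w. case_prod (Phi m \<epsilon> x z) (t, w))"
  proof (rule AE_I2)
    fix t :: real show "integrable lborel (\<lambda>w. case_prod (Phi m \<epsilon> x z) (t, w))"
    proof (cases "t > 0")
      case True then show ?thesis using Phi_w(1)[OF True] by simp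
    next
      case False then show ?thesis by (simp add: Phi_nonpos)
    qed
  qed
  have mm: "(\<lambda>t. \<integral>w. norm (Phi m \<epsilon> x z t w) \<partial>lborel) \<in> borel_measurable lborel"
  proof -
    have "(\<lambda>(t, w). norm (Phi m \<epsilon> x z t w)) \<in> borel_measurable (lborel \<Otimes>\<^sub>M lborel)"
      using Phi_meas[of m \<epsilon> x z] by (simp add: case_prod_beta' borel_measurable_norm)
    then show ?thesis by (rule lborel.borel_measurable_lebesgue_integral)
  qed
  define B where "B = pi * (2 * pi / \<epsilon>)\<^sup>2"
  have iB: "integrable lborel (\<lambda>t. B * (exp (- m\<^sup>2 * t) * indicator {0..} t))"
    using expint[of "m\<^sup>2" 0] m by (intro integrable_mult_right) (auto simp: has_bochner_integral_iff)
  show "integrable lborel (\<lambda>t. \<integral>w. norm (case_prod (Phi m \<epsilon> x z) (t, w)) \<partial>lborel)"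
  proof (rule Bochner_Integration.integrable_bound[OF iB])
    show "(\<lambda>t. \<integral>w. norm (case_prod (Phi m \<epsilon> x z) (t, w)) \<partial>lborel) \<in> borel_measurable lborel"
      using mm by simp
    show "AE t in lborel. norm (\<integral>w. norm (case_prod (Phi m \<epsilon> x z) (t, w)) \<partial>lborel) \<le> norm (B * (exp (- m\<^sup>2 * t) * indicator {0..} t))"
    proof (rule AE_I2)
      fix t :: real
      show "norm (\<integral>w. norm (case_prod (Phi m \<epsilon> x z) (t, w)) \<partial>lborel) \<le> norm (B * (exp (- m\<^sup>2 * t) * indicator {0..} t))"
      proof (cases "t > 0")
        case False then show ?thesis by (simp add: Phi_nonpos)
      next
        case t: True
        have L: "0 \<le> L0 \<epsilon> t" "L0 \<epsilon> t \<le> 2 * pi / \<epsilon>"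
          using L0_le[OF e, of t] t unfolding L0_def by (auto intro!: integral_nonneg_AE split: split_indicator)
        have "(\<integral>w. norm (Phi m \<epsilon> x z t w) \<partial>lborel) = (t * exp (- t * m\<^sup>2)) * ((sqrt (pi / t) * sqrt (pi / t)) * (L0 \<epsilon> t * L0 \<epsilon> t))"
          by (rule Phi_norm_w(2)[OF t])
        also have "\<dots> = exp (- t * m\<^sup>2) * (pi * (L0 \<epsilon> t * L0 \<epsilon> t))"
          using t by simp
        also have "\<dots> \<le> exp (- t * m\<^sup>2) * (pi * ((2 * pi / \<epsilon>) * (2 * pi / \<epsilon>)))"
          using L by (intro mult_left_mono mult_mono) auto
        finally show ?thesis using t by (simp add: B_def power2_eq_square integral_nonneg_AE mult.commute)
      qed
    qed
  qed
qed


lemma Green_T: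
  assumes m: "m > 0" and e: "\<epsilon> > 0"
  shows "Green m \<epsilon> x z = complex_of_real (1 / (2 * pi) ^ 4) * (\<integral>t. (\<integral>w. Phi m \<epsilon> x z t w \<partial>lborel) \<partial>lborel)"
proof -
  have "(LINT w : (UNIV \<times> ({-pi/\<epsilon>..pi/\<epsilon>} \<times> {-pi/\<epsilon>..pi/\<epsilon>})) | lborel.
        exp (- \<i> * complex_of_real (x \<bullet> fst w + snd w \<bullet> z)) / complex_of_real ((symb m \<epsilon> (fst w) (snd w))\<^sup>2))
     = (\<integral>w. (\<integral>t. Phi m \<epsilon> x z t w \<partial>lborel) \<partial>lborel)"
    unfolding set_lebesgue_integral_def Sbox_def[symmetric]
    by (rule arg_cong[where f="integral\<^sup>L lborel"], rule ext, rule has_bochner_integral_integral_eq[OF Phi_t_integral[OF m], symmetric])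
  also have "\<dots> = (\<integral>t. (\<integral>w. Phi m \<epsilon> x z t w \<partial>lborel) \<partial>lborel)"
    by (rule lborel_pair.Fubini_integral) (use Phi_integrable[OF m e, of x z] in simp)
  finally show ?thesis unfolding Green_def by simp
qed

lemma T_norm:
  assumes t: "t > 0"
  shows "norm (\<integral>w. Phi m \<epsilon> x z t w \<partial>lborel) = pi * (exp (- t * m\<^sup>2) * exp (- (norm x)\<^sup>2 / (4 * t)) * (norm (Lf \<epsilon> t (fst z)) * norm (Lf \<epsilon> t (snd z))))"
proof -
  have nx: "(norm x)\<^sup>2 = (fst x)\<^sup>2 + (snd x)\<^sup>2" by (simp add: norm_prod_def)
  have ee: "exp (- (fst x)\<^sup>2 / (4 * t)) * exp (- (snd x)\<^sup>2 / (4 * t)) = exp (- (norm x)\<^sup>2 / (4 * t))"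
  proof -
    have "- (fst x)\<^sup>2 / (4 * t) + - (snd x)\<^sup>2 / (4 * t) = - (norm x)\<^sup>2 / (4 * t)"
      unfolding nx using t by (simp add: field_simps)
    then show ?thesis by (simp flip: exp_add)
  qed
  have sq: "sqrt (pi / t) * sqrt (pi / t) = pi / t" using t by simp
  have "norm (\<integral>w. Phi m \<epsilon> x z t w \<partial>lborel) = (t * exp (- t * m\<^sup>2)) *
     ((sqrt (pi / t) * exp (- (fst x)\<^sup>2 / (4 * t))) * (sqrt (pi / t) * exp (- (snd x)\<^sup>2 / (4 * t))) *
      (norm (Lf \<epsilon> t (fst z)) * norm (Lf \<epsilon> t (snd z))))"
    unfolding Phi_w(2)[OF t] using t by (simp add: norm_mult abs_mult)
  also have "\<dots> = (t * (sqrt (pi / t) * sqrt (pi / t))) * (exp (- t * m\<^sup>2) *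
     (exp (- (fst x)\<^sup>2 / (4 * t)) * exp (- (snd x)\<^sup>2 / (4 * t))) * (norm (Lf \<epsilon> t (fst z)) * norm (Lf \<epsilon> t (snd z))))"
    by (simp only: ac_simps)
  also have "\<dots> = pi * (exp (- t * m\<^sup>2) * exp (- (norm x)\<^sup>2 / (4 * t)) * (norm (Lf \<epsilon> t (fst z)) * norm (Lf \<epsilon> t (snd z))))"
    unfolding sq ee using t by simp
  finally show ?thesis .
qed

definition Q :: "real \<Rightarrow> real \<Rightarrow> real \<times> real \<Rightarrow> real \<times> real \<Rightarrow> real \<Rightarrow> real" where
  "Q m \<epsilon> x z t = indicator {0<..} t * (exp (- t * m\<^sup>2) * exp (- (norm x)\<^sup>2 / (4 * t)) * (norm (Lf \<epsilon> t (fst z)) * norm (Lf \<epsilon> t (snd z))))"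

lemma Green_Q:
  assumes m: "m > 0" and e: "\<epsilon> > 0"
  shows "integrable lborel (Q m \<epsilon> x z)"
    and "norm (Green m \<epsilon> x z) \<le> 1 / (16 * pi ^ 3) * integral\<^sup>L lborel (Q m \<epsilon> x z)"
proof -
  define T where "T t = (\<integral>w. Phi m \<epsilon> x z t w \<partial>lborel)" for t
  have iT: "integrable lborel T"
    unfolding T_def using lborel_pair.integrable_fst'[OF Phi_integrable[OF m e, of x z]] by simp
  have nT: "norm (T t) = pi * Q m \<epsilon> x z t" for t
  proof (cases "t > 0")
    case True then show ?thesis unfolding T_def Q_def by (simp add: T_norm)
  next
    case False then show ?thesis unfolding T_def Q_def by (simp add: Phi_nonpos')
  qed
  have eqQ: "Q m \<epsilon> x z = (\<lambda>t. norm (T t) / pi)" by (simp add: fun_eq_iff nT)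
  show "integrable lborel (Q m \<epsilon> x z)" unfolding eqQ using iT by auto
  have "norm (Green m \<epsilon> x z) = 1 / (2 * pi) ^ 4 * norm (integral\<^sup>L lborel T)"
    unfolding Green_T[OF m e] T_def by (simp only: norm_mult norm_of_real) simp
  also have "\<dots> \<le> 1 / (2 * pi) ^ 4 * integral\<^sup>L lborel (\<lambda>t. norm (T t))"
    by (intro mult_left_mono integral_norm_bound) auto
  also have "integral\<^sup>L lborel (\<lambda>t. norm (T t)) = pi * integral\<^sup>L lborel (Q m \<epsilon> x z)"
    unfolding nT by simp
  also have "1 / (2 * pi) ^ 4 * (pi * integral\<^sup>L lborel (Q m \<epsilon> x z)) = 1 / (16 * pi ^ 3) * integral\<^sup>L lborel (Q m \<epsilon> x z)"
    by (simp add: field_simps power_mult_distrib power_Suc[symmetric] del: power_Suc)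
  finally show "norm (Green m \<epsilon> x z) \<le> 1 / (16 * pi ^ 3) * integral\<^sup>L lborel (Q m \<epsilon> x z)" .
qed




lemma L0_nonneg: "0 \<le> L0 \<epsilon> t"
  unfolding L0_def by (intro integral_nonneg_AE) (auto split: split_indicator)

lemma exp_le_inv_sqrt: assumes "s > 0" shows "exp (- s) \<le> 1 / sqrt s"
proof -
  have "sqrt s * exp (- s) \<le> exp (- s / 2)" using sqrt_exp_bound[of s] assms by simp
  also have "\<dots> \<le> 1" using assms by simp
  finally show ?thesis using assms by (simp add: field_simps)
qed

locale cst =
  fixes \<theta> \<delta> :: real
  assumes th: "0 < \<theta>" "\<theta> \<le> 1" and dl: "\<delta> > 0"
begin

definition "\<gamma> = (1 - \<theta>\<^sup>2 / 24)\<^sup>2"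
definition "\<eta> = \<gamma> * \<theta>\<^sup>2"
definition "Ka = (1 + \<delta>) * pi / \<gamma>"
definition "Kb = (1 + 1 / \<delta>) * (4 * pi\<^sup>2)"
definition "Ap = sqrt (pi / \<gamma>) + 2 * pi / sqrt \<eta>"
definition "Aa = 2 * sqrt 2 * Ap"

lemma g_pos: "\<gamma> > 0" and eta_pos: "\<eta> > 0"
proof -
  have "\<theta>\<^sup>2 \<le> 1" using th by (simp add: power_le_one)
  then show "\<gamma> > 0" unfolding \<gamma>_def by auto
  then show "\<eta> > 0" unfolding \<eta>_def using th by simp
qed

lemma L0_bd: assumes e: "\<epsilon> > 0" and t: "t > 0"
  shows "L0 \<epsilon> t \<le> sqrt (pi / (\<gamma> * t)) + 2 * pi / \<epsilon> * exp (- t * \<eta> / \<epsilon>\<^sup>2)"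
  using L0_gauss[OF e t th] unfolding \<gamma>_def \<eta>_def by simp

lemma L0_sq: assumes e: "\<epsilon> > 0" and t: "t > 0"
  shows "L0 \<epsilon> t * L0 \<epsilon> t \<le> Ka / t + Kb * exp (- (2 * \<eta> / \<epsilon>\<^sup>2) * t) / \<epsilon>\<^sup>2"
proof -
  define a where "a = sqrt (pi / (\<gamma> * t))"
  define b where "b = 2 * pi / \<epsilon> * exp (- t * \<eta> / \<epsilon>\<^sup>2)"
  have "L0 \<epsilon> t \<le> a + b" unfolding a_def b_def by (rule L0_bd[OF e t])
  moreover have "0 \<le> L0 \<epsilon> t" by (rule L0_nonneg)
  ultimately have "L0 \<epsilon> t * L0 \<epsilon> t \<le> (a + b) * (a + b)" by (intro mult_mono) auto
  also have "\<dots> \<le> (1 + \<delta>) * (a * a) + (1 + 1 / \<delta>) * (b * b)"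
  proof -
    have "0 \<le> (\<delta> * a - b)\<^sup>2" by simp
    then have "2 * a * b * \<delta> \<le> \<delta> * \<delta> * (a * a) + b * b" by (simp add: power2_eq_square algebra_simps)
    then have "2 * a * b \<le> \<delta> * (a * a) + (b * b) / \<delta>" using dl by (simp add: field_simps)
    then show ?thesis by (simp add: algebra_simps)
  qed
  also have "(1 + \<delta>) * (a * a) = Ka / t"
    unfolding a_def Ka_def using t g_pos by simp
  also have "(1 + 1 / \<delta>) * (b * b) = Kb * exp (- (2 * \<eta> / \<epsilon>\<^sup>2) * t) / \<epsilon>\<^sup>2"
    unfolding b_def Kb_def using e by (simp add: power2_eq_square field_simps flip: exp_add)
  finally show ?thesis .
qed

lemma aux_sqrt_exp: assumes "c > 0" "t > 0" shows "exp (- t * c) \<le> 1 / sqrt (t * c)"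
  using exp_le_inv_sqrt[of "t * c"] assms by (simp add: mult.commute)

lemma L0_sqrt: assumes e: "\<epsilon> > 0" and t: "t > 0"
  shows "L0 \<epsilon> t \<le> Ap / sqrt t"
proof -
  have "L0 \<epsilon> t \<le> sqrt (pi / (\<gamma> * t)) + 2 * pi / \<epsilon> * exp (- t * (\<eta> / \<epsilon>\<^sup>2))"
    using L0_bd[OF e t] by simp
  moreover have "exp (- t * (\<eta> / \<epsilon>\<^sup>2)) \<le> 1 / sqrt (t * (\<eta> / \<epsilon>\<^sup>2))"
    by (rule aux_sqrt_exp) (use e t eta_pos in auto)
  moreover have "1 / sqrt (t * (\<eta> / \<epsilon>\<^sup>2)) = \<epsilon> / (sqrt t * sqrt \<eta>)"
    using e by (simp add: real_sqrt_mult real_sqrt_divide)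
  ultimately have "L0 \<epsilon> t \<le> sqrt (pi / (\<gamma> * t)) + 2 * pi / \<epsilon> * (\<epsilon> / (sqrt t * sqrt \<eta>))"
    using e by (smt (verit) divide_pos_pos mult_left_mono pi_gt_zero)
  also have "\<dots> = Ap / sqrt t"
    unfolding Ap_def using e t g_pos eta_pos by (simp add: real_sqrt_mult real_sqrt_divide field_simps)
  finally show ?thesis .
qed

lemma Lf_dec: assumes e: "\<epsilon> > 0" and t: "t > 0" and n: "n \<noteq> 0"
  shows "norm (Lf \<epsilon> t (\<epsilon> * of_int n)) \<le> Aa / \<bar>\<epsilon> * of_int n\<bar>"
proof -
  have t2: "t / 2 > 0" using t by simp
  have c0: "\<bar>\<epsilon> * of_int n\<bar> > 0" using e n by simp
  have "norm (Lf \<epsilon> t (\<epsilon> * of_int n)) \<le> 2 * sqrt t / \<bar>\<epsilon> * of_int n\<bar> * L0 \<epsilon> (t / 2)"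
    by (rule Lf_ibp[OF e t n])
  also have "\<dots> \<le> 2 * sqrt t / \<bar>\<epsilon> * of_int n\<bar> * (Ap / sqrt (t / 2))"
    by (intro mult_left_mono L0_sqrt[OF e t2]) (use c0 t in auto)
  also have "\<dots> = 2 * sqrt 2 * Ap / \<bar>\<epsilon> * of_int n\<bar>"
    using t by (simp add: real_sqrt_divide field_simps)
  also have "2 * sqrt 2 * Ap = Aa" unfolding Aa_def ..
  finally show ?thesis .
qed

end



lemma powr_mhalf: "t \<ge> 0 \<Longrightarrow> t powr (-1/2) = 1 / sqrt t"
proof -
  assume t: "t \<ge> 0"
  have "t powr (-1/2) = 1 / t powr (1/2)" using powr_minus_divide[of t "1/2"] by simp
  then show ?thesis using powr_half_sqrt[OF t] by simp
qed

lemma hb_inv: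
  fixes a b K :: real
  assumes a: "0 < a"
  shows "has_bochner_integral lborel (\<lambda>t. K / t * indicator {a..b} t) (if a \<le> b then K * (ln b - ln a) else 0)"
proof (cases "a \<le> b")
  case True
  have "has_bochner_integral lborel (\<lambda>t. 1 / t * indicator {a..b} t) (ln b - ln a)"
    by (rule has_bochner_integral_FTC_Icc_nonneg[where f="\<lambda>t. 1 / t" and F=ln and a=a and b=b])
       (use a True in \<open>auto intro!: derivative_eq_intros\<close>)
  then have "has_bochner_integral lborel (\<lambda>t. K * (1 / t * indicator {a..b} t)) (K * (ln b - ln a))"
    by (rule has_bochner_integral_mult_right)
  then show ?thesis using True by simp
next
  case False
  then have "(\<lambda>t. K / t * indicator {a..b} t) = (\<lambda>t. 0::real)" by (auto simp: fun_eq_iff)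
  then show ?thesis using False by (simp add: has_bochner_integral_zero)
qed

lemma hb_sqrt:
  assumes c: "0 < c"
  shows "has_bochner_integral lborel (\<lambda>t. t powr (-1/2) * indicator {0..c} t) (2 * sqrt c)"
proof -
  have HK: "((\<lambda>t. t powr (-1/2)) has_integral (c powr (-1/2 + 1) / (-1/2 + 1))) {0..c}"
    by (rule has_integral_powr_from_0) (use c in auto)
  have v: "c powr (-1/2 + 1) / (-1/2 + 1) = 2 * sqrt c"
    using c by (simp add: powr_half_sqrt)
  have "(\<integral>\<^sup>+t. ennreal (t powr (-1/2)) * indicator {0..c} t \<partial>lborel) = ennreal (2 * sqrt c)"
    using nn_integral_has_integral_lebesgue'[OF _ HK] v by (simp add: mult.commute)
  then have N: "(\<integral>\<^sup>+t. ennreal (t powr (-1/2) * indicator {0..c} t) \<partial>lborel) = ennreal (2 * sqrt c)"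
    by (simp add: indicator_mult_ennreal mult.commute)
  show ?thesis
    by (rule has_bochner_integral_nn_integral[OF _ _ _ N]) (use c in \<open>auto split: split_indicator\<close>)
qed

lemma hb_const:
  fixes K :: real
  assumes c: "0 \<le> c"
  shows "has_bochner_integral lborel (\<lambda>t. K * indicator {0..c} t) (K * c)"
proof -
  have "has_bochner_integral lborel (\<lambda>t. K * indicator {0..c} t) (K * measure lborel {0..c})"
    by (intro has_bochner_integral_mult_right has_bochner_integral_real_indicator) (auto simp: emeasure_Icc_fin')
  then show ?thesis using c by simp
qed




context cst
begin

definition "B0 = sqrt 8 * Ap\<^sup>2 + 2 * Aa * Ap"

lemma Ap_pos: "Ap > 0" unfolding Ap_def using g_pos eta_pos by (intro add_pos_pos) auto
lemma Aa_pos: "Aa > 0" unfolding Aa_def using Ap_pos by simp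
lemma Ka_pos: "Ka > 0" unfolding Ka_def using g_pos dl by simp
lemma Kb_pos: "Kb > 0" unfolding Kb_def using dl by (intro mult_pos_pos add_pos_pos) auto

definition Us :: "real \<Rightarrow> real \<Rightarrow> real \<Rightarrow> real" where
  "Us \<epsilon> \<rho> t = (if \<rho> \<le> \<epsilon> then (4 * pi\<^sup>2 / \<epsilon>\<^sup>2) * indicator {0..\<epsilon>\<^sup>2} t
                  else (B0 / \<rho>) * (t powr (-1/2) * indicator {0..\<rho>\<^sup>2} t))"

definition U :: "real \<Rightarrow> real \<Rightarrow> real \<Rightarrow> real \<Rightarrow> real \<Rightarrow> real" where
  "U m \<epsilon> \<rho> r t = Us \<epsilon> \<rho> t + Ka / t * indicator {r\<^sup>2..1} t + Ka * (exp (- m\<^sup>2 * t) * indicator {1..} t)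
      + Kb / \<epsilon>\<^sup>2 * (exp (- (2 * \<eta> / \<epsilon>\<^sup>2) * t) * indicator {0..} t)"

lemma Us_nonneg: "\<epsilon> > 0 \<Longrightarrow> 0 \<le> Us \<epsilon> \<rho> t"
  unfolding Us_def B0_def using Ap_pos Aa_pos
  by (auto split: split_indicator intro!: mult_nonneg_nonneg)

lemma p3le1: "0 \<le> a \<Longrightarrow> a \<le> 1 \<Longrightarrow> 0 \<le> b \<Longrightarrow> b \<le> 1 \<Longrightarrow> 0 \<le> c \<Longrightarrow> a * b * (c::real) \<le> c"
  by (metis mult_left_le_one_le mult_nonneg_nonneg mult_le_one)

lemma p3le2: "0 \<le> a \<Longrightarrow> a \<le> 1 \<Longrightarrow> 0 \<le> b \<Longrightarrow> 0 \<le> c \<Longrightarrow> a * b * (c::real) \<le> b * c"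
  by (metis mult.assoc mult_left_le_one_le mult_nonneg_nonneg)

lemma Lf_le_L0: "norm (Lf \<epsilon> t c) \<le> L0 \<epsilon> t" by (rule norm_Lf)

lemma Q_le:
  fixes m \<epsilon> t :: real and x z :: "real \<times> real"
  assumes m: "m > 0" and e: "\<epsilon> > 0" and z: "z \<in> lattice \<epsilon>" and t: "t > 0"
  defines "\<rho> \<equiv> sqrt ((norm x)\<^sup>2 + (norm z)\<^sup>2)"
  defines "r \<equiv> max \<rho> \<epsilon>"
  shows "Q m \<epsilon> x z t \<le> U m \<epsilon> \<rho> r t"
proof -
  define l1 where "l1 = norm (Lf \<epsilon> t (fst z))"
  define l2 where "l2 = norm (Lf \<epsilon> t (snd z))"
  define ex where "ex = exp (- (norm x)\<^sup>2 / (4 * t))"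
  have l1: "0 \<le> l1" "l1 \<le> L0 \<epsilon> t" unfolding l1_def by (auto intro: norm_Lf)
  have l2: "0 \<le> l2" "l2 \<le> L0 \<epsilon> t" unfolding l2_def by (auto intro: norm_Lf)
  have ex: "0 < ex" "ex \<le> 1" unfolding ex_def using t by auto
  have em: "0 < exp (- t * m\<^sup>2)" "exp (- t * m\<^sup>2) \<le> 1" using t by auto
  have Qe: "Q m \<epsilon> x z t = exp (- t * m\<^sup>2) * ex * (l1 * l2)"
    unfolding Q_def l1_def l2_def ex_def using t by simp
  have ll: "l1 * l2 \<le> L0 \<epsilon> t * L0 \<epsilon> t" using l1 l2 by (intro mult_mono) auto
  have p1: "0 \<le> Ka / t * indicator {r\<^sup>2..1} t" using Ka_pos t by (auto split: split_indicator)
  have p2: "0 \<le> Ka * (exp (- m\<^sup>2 * t) * indicator {1..} t)" using Ka_pos by (auto split: split_indicator)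
  have p3: "0 \<le> Kb / \<epsilon>\<^sup>2 * (exp (- (2 * \<eta> / \<epsilon>\<^sup>2) * t) * indicator {0..} t)" using Kb_pos by (auto split: split_indicator)
  have p0: "0 \<le> Us \<epsilon> \<rho> t" using Us_nonneg[OF e] .
  show ?thesis
  proof (cases "r\<^sup>2 \<le> t")
    case big: True
    have "Q m \<epsilon> x z t \<le> exp (- t * m\<^sup>2) * (l1 * l2)"
      unfolding Qe using ex em l1 l2 by (simp add: mult.commute mult.left_commute mult_left_le_one_le mult_left_mono)
    also have "\<dots> \<le> exp (- t * m\<^sup>2) * (L0 \<epsilon> t * L0 \<epsilon> t)"
      using ll em by (intro mult_left_mono) auto
    also have "\<dots> \<le> exp (- t * m\<^sup>2) * (Ka / t + Kb * exp (- (2 * \<eta> / \<epsilon>\<^sup>2) * t) / \<epsilon>\<^sup>2)"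
      using em L0_sq[OF e t] by (intro mult_left_mono) auto
    also have "\<dots> = exp (- t * m\<^sup>2) * (Ka / t) + exp (- t * m\<^sup>2) * (Kb * exp (- (2 * \<eta> / \<epsilon>\<^sup>2) * t) / \<epsilon>\<^sup>2)"
      by (simp add: algebra_simps)
    also have "exp (- t * m\<^sup>2) * (Kb * exp (- (2 * \<eta> / \<epsilon>\<^sup>2) * t) / \<epsilon>\<^sup>2) \<le> Kb / \<epsilon>\<^sup>2 * (exp (- (2 * \<eta> / \<epsilon>\<^sup>2) * t) * indicator {0..} t)"
    proof -
      have "exp (- t * m\<^sup>2) * (Kb * exp (- (2 * \<eta> / \<epsilon>\<^sup>2) * t) / \<epsilon>\<^sup>2) \<le> 1 * (Kb * exp (- (2 * \<eta> / \<epsilon>\<^sup>2) * t) / \<epsilon>\<^sup>2)"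
        using em Kb_pos by (intro mult_right_mono) auto
      then show ?thesis using t by simp
    qed
    also have "exp (- t * m\<^sup>2) * (Ka / t) \<le> Ka / t * indicator {r\<^sup>2..1} t + Ka * (exp (- m\<^sup>2 * t) * indicator {1..} t)"
    proof (cases "t \<le> 1")
      case True
      have "exp (- t * m\<^sup>2) * (Ka / t) \<le> 1 * (Ka / t)" using em Ka_pos t by (intro mult_right_mono) auto
      then show ?thesis using True big p2 by (simp add: indicator_def)
    next
      case False
      have "Ka / t \<le> Ka" using False Ka_pos by (simp add: field_simps)
      then have "exp (- t * m\<^sup>2) * (Ka / t) \<le> exp (- t * m\<^sup>2) * Ka" by (intro mult_left_mono) auto
      moreover have "exp (- t * m\<^sup>2) * Ka = Ka * exp (- m\<^sup>2 * t)" by (simp add: mult.commute)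
      ultimately have "exp (- t * m\<^sup>2) * (Ka / t) \<le> Ka * exp (- m\<^sup>2 * t)" by linarith
      then show ?thesis using False p1 by (simp add: indicator_def)
    qed
    finally show ?thesis unfolding U_def using p0 by linarith
  next
    case small: False
    have "Q m \<epsilon> x z t \<le> Us \<epsilon> \<rho> t"
    proof (cases "\<rho> \<le> \<epsilon>")
      case True
      then have "r = \<epsilon>" unfolding r_def by simp
      then have tle: "t \<le> \<epsilon>\<^sup>2" using small by simp
      have L: "L0 \<epsilon> t \<le> 2 * pi / \<epsilon>" using L0_le[OF e] t by simp
      have "Q m \<epsilon> x z t \<le> l1 * l2"
        unfolding Qe using ex em l1 l2 by (intro p3le1) auto
      also have "\<dots> \<le> L0 \<epsilon> t * L0 \<epsilon> t" by (rule ll)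
      also have "\<dots> \<le> (2 * pi / \<epsilon>) * (2 * pi / \<epsilon>)" using L L0_nonneg e by (intro mult_mono) auto
      also have "\<dots> = Us \<epsilon> \<rho> t" unfolding Us_def using True tle t by (simp add: power2_eq_square)
      finally show ?thesis .
    next
      case False
      then have rr: "r = \<rho>" and rpos: "\<rho> > 0" unfolding r_def using e by auto
      have tle: "t < \<rho>\<^sup>2" using small rr by simp
      have pw: "t powr (-1/2) = 1 / sqrt t" by (rule powr_mhalf) (use t in simp)
      have Usv: "Us \<epsilon> \<rho> t = B0 / (\<rho> * sqrt t)" unfolding Us_def pw using False tle t by simp
      have st: "sqrt t > 0" using t by simp
      have L0s: "L0 \<epsilon> t \<le> Ap / sqrt t" by (rule L0_sqrt[OF e t])
      have rho2: "\<rho>\<^sup>2 = (norm x)\<^sup>2 + (norm z)\<^sup>2" unfolding \<rho>_def by simp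
      have "Q m \<epsilon> x z t \<le> (sqrt 8 * Ap\<^sup>2 + 2 * Aa * Ap) / (\<rho> * sqrt t)"
      proof (cases "(norm x)\<^sup>2 \<ge> \<rho>\<^sup>2 / 2")
        case True
        have "ex \<le> exp (- (\<rho>\<^sup>2 / (8 * t)))"
          unfolding ex_def using True t by (simp add: field_simps)
        also have "\<dots> \<le> 1 / sqrt (\<rho>\<^sup>2 / (8 * t))" by (rule exp_le_inv_sqrt) (use rpos t in simp)
        also have "\<dots> = sqrt 8 * sqrt t / \<rho>" using rpos t by (simp add: real_sqrt_divide real_sqrt_mult)
        finally have exb: "ex \<le> sqrt 8 * sqrt t / \<rho>" .
        have "Q m \<epsilon> x z t \<le> ex * (l1 * l2)"
          unfolding Qe using ex em l1 l2 by (intro p3le2) auto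
        also have "\<dots> \<le> ex * (L0 \<epsilon> t * L0 \<epsilon> t)" using ll ex by (intro mult_left_mono) auto
        also have "\<dots> \<le> (sqrt 8 * sqrt t / \<rho>) * ((Ap / sqrt t) * (Ap / sqrt t))"
          using exb L0s L0_nonneg ex Ap_pos st by (intro mult_mono) auto
        also have "\<dots> = sqrt 8 * Ap\<^sup>2 / (\<rho> * sqrt t)"
        proof -
          have gen: "(sqrt 8 * s / \<rho>) * ((Ap / s) * (Ap / s)) = sqrt 8 * Ap\<^sup>2 / (\<rho> * s)" if "s > 0" for s
            using that rpos by (simp add: field_simps power2_eq_square)
          show ?thesis by (rule gen[OF st])
        qed
        also have "\<dots> \<le> (sqrt 8 * Ap\<^sup>2 + 2 * Aa * Ap) / (\<rho> * sqrt t)"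
          using Aa_pos Ap_pos rpos st by (intro divide_right_mono) auto
        finally show ?thesis .
      next
        case False
        then have nz: "(norm z)\<^sup>2 > \<rho>\<^sup>2 / 2" using rho2 by linarith
        obtain a b :: int where zab: "z = (\<epsilon> * of_int a, \<epsilon> * of_int b)" using z unfolding lattice_def by auto
        have nz2: "(norm z)\<^sup>2 = (\<epsilon> * of_int a)\<^sup>2 + (\<epsilon> * of_int b)\<^sup>2" unfolding zab by (simp add: norm_prod_def)
        have key: "l1 * l2 \<le> 2 * Aa / \<rho> * (Ap / sqrt t)"
        proof (cases "(\<epsilon> * of_int a)\<^sup>2 \<ge> \<rho>\<^sup>2 / 4")
          case True
          then have "(\<rho> / 2)\<^sup>2 \<le> (\<epsilon> * of_int a)\<^sup>2" by (simp add: power_divide)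
          then have "\<bar>\<rho> / 2\<bar> \<le> \<bar>\<epsilon> * of_int a\<bar>" by (simp only: abs_le_square_iff)
          then have ge: "\<bar>\<epsilon> * of_int a\<bar> \<ge> \<rho> / 2" using rpos by simp
          then have a0: "a \<noteq> 0" using rpos by auto
          have "l1 \<le> Aa / \<bar>\<epsilon> * of_int a\<bar>" unfolding l1_def zab using Lf_dec[OF e t a0] by simp
          also have "\<dots> \<le> Aa / (\<rho> / 2)"
          proof -
            have "\<bar>\<epsilon> * of_int a\<bar> > 0" using ge rpos by linarith
            then show ?thesis using ge rpos Aa_pos by (intro divide_left_mono) auto
          qed
          finally have "l1 \<le> 2 * Aa / \<rho>" by (simp add: mult.commute)
          moreover have "l2 \<le> Ap / sqrt t" using l2 L0s by simp
          ultimately show ?thesis using l1 l2 by (intro mult_mono) auto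
        next
          case False
          then have "(\<epsilon> * of_int b)\<^sup>2 \<ge> \<rho>\<^sup>2 / 4" using nz nz2 by simp
          then have "(\<rho> / 2)\<^sup>2 \<le> (\<epsilon> * of_int b)\<^sup>2" by (simp add: power_divide)
          then have "\<bar>\<rho> / 2\<bar> \<le> \<bar>\<epsilon> * of_int b\<bar>" by (simp only: abs_le_square_iff)
          then have ge: "\<bar>\<epsilon> * of_int b\<bar> \<ge> \<rho> / 2" using rpos by simp
          then have b0: "b \<noteq> 0" using rpos by auto
          have "l2 \<le> Aa / \<bar>\<epsilon> * of_int b\<bar>" unfolding l2_def zab using Lf_dec[OF e t b0] by simp
          also have "\<dots> \<le> Aa / (\<rho> / 2)"
          proof -
            have "\<bar>\<epsilon> * of_int b\<bar> > 0" using ge rpos by linarith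
            then show ?thesis using ge rpos Aa_pos by (intro divide_left_mono) auto
          qed
          finally have "l2 \<le> 2 * Aa / \<rho>" by (simp add: mult.commute)
          moreover have "l1 \<le> Ap / sqrt t" using l1 L0s by simp
          ultimately have "l2 * l1 \<le> 2 * Aa / \<rho> * (Ap / sqrt t)" using l1 l2 by (intro mult_mono) auto
          then show ?thesis by (simp add: mult.commute)
        qed
        have "Q m \<epsilon> x z t \<le> l1 * l2"
          unfolding Qe using ex em l1 l2 by (intro p3le1) auto
        also have "\<dots> \<le> 2 * Aa / \<rho> * (Ap / sqrt t)" by (rule key)
        also have "\<dots> = 2 * Aa * Ap / (\<rho> * sqrt t)" by simp
        also have "\<dots> \<le> (sqrt 8 * Ap\<^sup>2 + 2 * Aa * Ap) / (\<rho> * sqrt t)"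
          using Aa_pos Ap_pos rpos st by (intro divide_right_mono) auto
        finally show ?thesis .
      qed
      then show ?thesis unfolding Usv B0_def .
    qed
    then show ?thesis unfolding U_def using p1 p2 p3 by linarith
  qed
qed

end



context cst
begin

lemma U_nonneg: assumes e: "\<epsilon> > 0" and r: "r > 0" shows "0 \<le> U m \<epsilon> \<rho> r t"
proof -
  have "0 \<le> Ka / t * indicator {r\<^sup>2..1} t"
  proof (cases "t \<in> {r\<^sup>2..1}")
    case True then have "t > 0" using r by (auto intro: less_le_trans[of 0 "r\<^sup>2"])
    then show ?thesis using Ka_pos True by simp
  qed simp
  moreover have "0 \<le> Us \<epsilon> \<rho> t" by (rule Us_nonneg[OF e])
  moreover have "0 \<le> Ka * (exp (- m\<^sup>2 * t) * indicator {1..} t)" using Ka_pos by (auto split: split_indicator)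
  moreover have "0 \<le> Kb / \<epsilon>\<^sup>2 * (exp (- (2 * \<eta> / \<epsilon>\<^sup>2) * t) * indicator {0..} t)" using Kb_pos by (auto split: split_indicator)
  ultimately show ?thesis unfolding U_def by linarith
qed

lemma U_hb:
  assumes m: "m > 0" and e: "\<epsilon> > 0" and rho: "\<rho> \<ge> 0" and r: "r = max \<rho> \<epsilon>"
  shows "has_bochner_integral lborel (U m \<epsilon> \<rho> r)
     ((if \<rho> \<le> \<epsilon> then 4 * pi\<^sup>2 / \<epsilon>\<^sup>2 * \<epsilon>\<^sup>2 else B0 / \<rho> * (2 * sqrt (\<rho>\<^sup>2)))
      + (if r\<^sup>2 \<le> 1 then Ka * (ln 1 - ln (r\<^sup>2)) else 0)
      + Ka * (exp (- m\<^sup>2 * 1) / m\<^sup>2)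
      + Kb / \<epsilon>\<^sup>2 * (exp (- (2 * \<eta> / \<epsilon>\<^sup>2) * 0) / (2 * \<eta> / \<epsilon>\<^sup>2)))"
proof -
  have r0: "r > 0" using r e by simp
  have hUs: "has_bochner_integral lborel (Us \<epsilon> \<rho>) (if \<rho> \<le> \<epsilon> then 4 * pi\<^sup>2 / \<epsilon>\<^sup>2 * \<epsilon>\<^sup>2 else B0 / \<rho> * (2 * sqrt (\<rho>\<^sup>2)))"
  proof (cases "\<rho> \<le> \<epsilon>")
    case True
    have "has_bochner_integral lborel (\<lambda>t. 4 * pi\<^sup>2 / \<epsilon>\<^sup>2 * indicator {0..\<epsilon>\<^sup>2} t) (4 * pi\<^sup>2 / \<epsilon>\<^sup>2 * \<epsilon>\<^sup>2)"
      by (rule hb_const) simp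
    then show ?thesis using True unfolding Us_def[abs_def] by simp
  next
    case False
    then have "\<rho>\<^sup>2 > 0" using e by simp
    from hb_sqrt[OF this] have "has_bochner_integral lborel (\<lambda>t. B0 / \<rho> * (t powr (-1/2) * indicator {0..\<rho>\<^sup>2} t)) (B0 / \<rho> * (2 * sqrt (\<rho>\<^sup>2)))"
      by (rule has_bochner_integral_mult_right)
    then show ?thesis using False unfolding Us_def[abs_def] by simp
  qed
  have hmid: "has_bochner_integral lborel (\<lambda>t. Ka / t * indicator {r\<^sup>2..1} t) (if r\<^sup>2 \<le> 1 then Ka * (ln 1 - ln (r\<^sup>2)) else 0)"
    by (rule hb_inv) (use r0 in simp)
  have htail: "has_bochner_integral lborel (\<lambda>t. Ka * (exp (- m\<^sup>2 * t) * indicator {1..} t)) (Ka * (exp (- m\<^sup>2 * 1) / m\<^sup>2))"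
    by (intro has_bochner_integral_mult_right expint) (use m in simp)
  have hexp: "has_bochner_integral lborel (\<lambda>t. Kb / \<epsilon>\<^sup>2 * (exp (- (2 * \<eta> / \<epsilon>\<^sup>2) * t) * indicator {0..} t))
       (Kb / \<epsilon>\<^sup>2 * (exp (- (2 * \<eta> / \<epsilon>\<^sup>2) * 0) / (2 * \<eta> / \<epsilon>\<^sup>2)))"
    by (intro has_bochner_integral_mult_right expint) (use e eta_pos in simp)
  show ?thesis
    unfolding U_def[abs_def]
    by (intro has_bochner_integral_add hUs hmid htail hexp)
qed

end



lemma log_plus_nonneg: "0 \<le> log_plus t" by (simp add: log_plus_def)

theorem mainTheorem13:
  fixes m C :: real
  assumes "m > 0" and "C > 2 / (4 * pi)\<^sup>2"
  shows "\<exists>D > 0. \<forall>\<epsilon> x z. 0 < \<epsilon> \<and> \<epsilon> \<le> 1 \<and> z \<in> lattice \<epsilon> \<longrightarrow>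
           cmod (Green m \<epsilon> x z)
             \<le> C * log_plus (1 / max (sqrt ((norm x)\<^sup>2 + (norm z)\<^sup>2)) \<epsilon>) + D"
proof -
  have m: "m > 0" using assms(1) .
  define R where "R = 8 * pi\<^sup>2 * C"
  have R1: "R > 1"
  proof -
    have "2 / (4 * pi)\<^sup>2 = 1 / (8 * pi\<^sup>2)" by (simp add: power2_eq_square field_simps)
    then have "C > 1 / (8 * pi\<^sup>2)" using assms(2) by simp
    then show ?thesis unfolding R_def by (simp add: field_simps)
  qed
  define \<theta> where "\<theta> = min 1 (sqrt ((R - 1) / R))"
  define \<delta> where "\<delta> = (R - 1) / 2"
  have th: "0 < \<theta>" "\<theta> \<le> 1" using R1 unfolding \<theta>_def by auto
  have dl: "\<delta> > 0" using R1 unfolding \<delta>_def by simp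
  interpret cst \<theta> \<delta> by unfold_locales (use th dl in auto)
  have th2: "\<theta>\<^sup>2 \<le> (R - 1) / R"
  proof -
    have "\<theta> \<le> sqrt ((R - 1) / R)" unfolding \<theta>_def by simp
    then have "\<theta>\<^sup>2 \<le> (sqrt ((R - 1) / R))\<^sup>2" using th by (intro power_mono) auto
    then show ?thesis using R1 by simp
  qed
  have key: "(1 + \<delta>) / \<gamma> \<le> R"
  proof -
    have "\<gamma> \<ge> 1 - \<theta>\<^sup>2 / 12"
    proof -
      have "\<gamma> = 1 - \<theta>\<^sup>2 / 12 + (\<theta>\<^sup>2 / 24)\<^sup>2" unfolding \<gamma>_def by (simp add: power2_eq_square field_simps)
      then show ?thesis by simp
    qed
    then have "R * \<gamma> \<ge> R * (1 - \<theta>\<^sup>2 / 12)" using R1 by (intro mult_left_mono) auto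
    moreover have "R * (1 - \<theta>\<^sup>2 / 12) \<ge> R - (R - 1) / 12"
    proof -
      have "\<theta>\<^sup>2 / 12 \<le> (R - 1) / R / 12" by (rule divide_right_mono[OF th2]) simp
      then have "R * (\<theta>\<^sup>2 / 12) \<le> R * ((R - 1) / R / 12)" using R1 by (intro mult_left_mono) auto
      moreover have "R * ((R - 1) / R / 12) = (R - 1) / 12" using R1 by simp
      moreover have "R * (1 - \<theta>\<^sup>2 / 12) = R - R * (\<theta>\<^sup>2 / 12)" by (simp add: algebra_simps)
      ultimately show ?thesis by linarith
    qed
    moreover have "1 + \<delta> \<le> R - (R - 1) / 12" using R1 unfolding \<delta>_def by (simp add: field_simps)
    ultimately have "R * \<gamma> \<ge> 1 + \<delta>" by (meson order_trans)
    then show ?thesis using g_pos by (simp add: field_simps)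
  qed
  have coef: "2 * Ka / (16 * pi ^ 3) \<le> C"
  proof -
    have "2 * Ka / (16 * pi ^ 3) = ((1 + \<delta>) / \<gamma>) / (8 * pi\<^sup>2)"
      unfolding Ka_def using g_pos by (simp add: power2_eq_square power3_eq_cube field_simps)
    also have "\<dots> \<le> R / (8 * pi\<^sup>2)" using key by (intro divide_right_mono) auto
    also have "\<dots> = C" unfolding R_def by simp
    finally show ?thesis .
  qed
  define D where "D = (4 * pi\<^sup>2 + 2 * B0 + Ka / m\<^sup>2 + Kb / (2 * \<eta>)) / (16 * pi ^ 3) + 1"
  have B0pos: "B0 > 0" unfolding B0_def using Ap_pos Aa_pos by (intro add_pos_pos) auto
  have Dpos: "D > 0" unfolding D_def using B0pos Ka_pos Kb_pos eta_pos m
    by (intro add_nonneg_pos divide_nonneg_pos) auto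
  show ?thesis
  proof (intro exI[of _ D] conjI allI impI Dpos)
    fix \<epsilon> :: real and x z :: "real \<times> real"
    assume H: "0 < \<epsilon> \<and> \<epsilon> \<le> 1 \<and> z \<in> lattice \<epsilon>"
    then have e: "\<epsilon> > 0" and z: "z \<in> lattice \<epsilon>" by auto
    define \<rho> where "\<rho> = sqrt ((norm x)\<^sup>2 + (norm z)\<^sup>2)"
    define r where "r = max \<rho> \<epsilon>"
    have rho0: "\<rho> \<ge> 0" unfolding \<rho>_def by simp
    have r0: "r > 0" unfolding r_def using e by simp
    define us where "us = (if \<rho> \<le> \<epsilon> then 4 * pi\<^sup>2 / \<epsilon>\<^sup>2 * \<epsilon>\<^sup>2 else B0 / \<rho> * (2 * sqrt (\<rho>\<^sup>2)))"
    define mid where "mid = (if r\<^sup>2 \<le> 1 then Ka * (ln 1 - ln (r\<^sup>2)) else 0)"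
    define u where "u = us + mid + Ka * (exp (- m\<^sup>2 * 1) / m\<^sup>2)
      + Kb / \<epsilon>\<^sup>2 * (exp (- (2 * \<eta> / \<epsilon>\<^sup>2) * 0) / (2 * \<eta> / \<epsilon>\<^sup>2))"
    have hU: "has_bochner_integral lborel (U m \<epsilon> \<rho> r) u"
      unfolding u_def us_def mid_def by (rule U_hb[OF m e rho0 r_def])
    have GQ: "norm (Green m \<epsilon> x z) \<le> 1 / (16 * pi ^ 3) * integral\<^sup>L lborel (Q m \<epsilon> x z)"
      by (rule Green_Q(2)[OF m e])
    have IQ: "integral\<^sup>L lborel (Q m \<epsilon> x z) \<le> u"
    proof -
      have "integral\<^sup>L lborel (Q m \<epsilon> x z) \<le> integral\<^sup>L lborel (U m \<epsilon> \<rho> r)"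
      proof (rule integral_mono[OF Green_Q(1)[OF m e]])
        show "integrable lborel (U m \<epsilon> \<rho> r)" using hU by (simp add: has_bochner_integral_iff)
        fix t :: real
        show "Q m \<epsilon> x z t \<le> U m \<epsilon> \<rho> r t"
        proof (cases "t > 0")
          case True then show ?thesis unfolding \<rho>_def r_def by (rule Q_le[OF m e z])
        next
          case False
          then have "Q m \<epsilon> x z t = 0" by (simp add: Q_def)
          then show ?thesis using U_nonneg[OF e r0] by simp
        qed
      qed
      also have "\<dots> = u" using hU by (simp add: has_bochner_integral_iff)
      finally show ?thesis .
    qed
    have us_le: "us \<le> 4 * pi\<^sup>2 + 2 * B0"
      unfolding us_def using e B0pos rho0 by (auto simp: field_simps)
    have mid_le: "mid \<le> 2 * Ka * log_plus (1 / r)"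
    proof (cases "r\<^sup>2 \<le> 1")
      case True
      have "ln (r\<^sup>2) = 2 * ln r" using r0 by (simp add: ln_realpow)
      moreover have "ln (1 / r) = - ln r" using r0 by (simp add: ln_div)
      ultimately have "mid = 2 * Ka * ln (1 / r)" unfolding mid_def using True by simp
      also have "\<dots> \<le> 2 * Ka * log_plus (1 / r)" using Ka_pos unfolding log_plus_def by (intro mult_left_mono) auto
      finally show ?thesis .
    next
      case False then show ?thesis unfolding mid_def using Ka_pos log_plus_nonneg by simp
    qed
    have tail_le: "Ka * (exp (- m\<^sup>2 * 1) / m\<^sup>2) \<le> Ka / m\<^sup>2"
    proof -
      have "exp (- m\<^sup>2 * 1) \<le> 1" using m by simp
      then show ?thesis using Ka_pos m by (simp add: divide_right_mono mult_left_le)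
    qed
    have exp_eq: "Kb / \<epsilon>\<^sup>2 * (exp (- (2 * \<eta> / \<epsilon>\<^sup>2) * 0) / (2 * \<eta> / \<epsilon>\<^sup>2)) = Kb / (2 * \<eta>)"
      using e eta_pos by (simp add: field_simps)
    have "u \<le> 4 * pi\<^sup>2 + 2 * B0 + 2 * Ka * log_plus (1 / r) + Ka / m\<^sup>2 + Kb / (2 * \<eta>)"
      unfolding u_def exp_eq using us_le mid_le tail_le by linarith
    then have "norm (Green m \<epsilon> x z) \<le> 1 / (16 * pi ^ 3) * (4 * pi\<^sup>2 + 2 * B0 + 2 * Ka * log_plus (1 / r) + Ka / m\<^sup>2 + Kb / (2 * \<eta>))"
      using GQ IQ by (smt (verit) mult_left_mono pi_gt_zero zero_le_divide_1_iff zero_le_power)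
    also have "\<dots> = (2 * Ka / (16 * pi ^ 3)) * log_plus (1 / r) + (D - 1)"
      unfolding D_def by (simp add: field_simps)
    also have "\<dots> \<le> C * log_plus (1 / r) + D"
      using coef log_plus_nonneg[of "1 / r"] by (smt (verit) mult_right_mono)
    finally show "cmod (Green m \<epsilon> x z) \<le> C * log_plus (1 / max (sqrt ((norm x)\<^sup>2 + (norm z)\<^sup>2)) \<epsilon>) + D"
      unfolding r_def \<rho>_def .
  qed
qed


end
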